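(* Let $G=(V,E)$ be a simple 2-vertex-connected graph without irrelevant edges, let $\{u,v\}$ be a 2-vertex-cut of $G$, let $(V_1,V_2)$ with $V_1\ne\emptyset\ne V_2$ be a partition of $V\setminus\{u,v\}$ with no edges of $G$ between $V_1$ and $V_2$, and let $H\subseteq E$ be such that $(V,H)$ is a 2-edge-connected spanning subgraph of $G$. For $i\in\{1,2\}$ let $G_i=G[V_i\cup\{u,v\}]$ and $H_i=E(G_i)\cap H$ (viewed as a subgraph on node set $V_i\cup\{u,v\}$). Then: (1) each of $H_1,H_2$ is of type A, B or C with respect to $\{u,v\}$, and if one of them is of type C then the other is of type A; (2) if $H_i$ is of type C then there is an edge $f\in E(G_i)$ such that $H_i\cup\{f\}$ is of type B; consequently there exists a 2-edge-connected spanning subgraph $H'$ of $G$ such that $H'\cap E(G_i)$ is of type A or B.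
   Context: A graph is 2-edge-connected (2EC) if connected and it stays connected after removal of any one edge; 2-vertex-connected if it has at least 3 nodes, is connected and has no 1-vertex-cut. An edge $xy$ is irrelevant if $\{x,y\}$ is a 2-vertex-cut. For a graph $K$ and nodes $u,v\in V(K)$: the 2EC components of $K$ are its maximal 2EC subgraphs, where a single node not contained in any 2EC subgraph with at least 2 nodes counts as its own (degenerate) 2EC component; let $K'$ be obtained by contracting each 2EC component into a super-node, and let $C(u),C(v)$ be the super-nodes containing $u,v$. $K$ is of type A w.r.t. $\{u,v\}$ if $K'$ is a single super-node $C(u)=C(v)$; of type B if $K'$ is a $C(u)$-$C(v)$ path with at least one edge; of type C if $K'$ consists of exactly two isolated super-nodes $C(u)$ and $C(v)$. *)

theory Defs
  imports Main
begin

definition simple_graph :: "'a set \<Rightarrow> 'a set set \<Rightarrow> bool" where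
  "simple_graph V E \<longleftrightarrow> finite V \<and> (\<forall>e\<in>E. \<exists>x y. e = {x, y} \<and> x \<noteq> y \<and> x \<in> V \<and> y \<in> V)"

definition adj :: "'a set set \<Rightarrow> ('a \<times> 'a) set" where
  "adj F = {(a, b). {a, b} \<in> F}"

text \<open>Connectivity of the graph (X, F), where F is assumed to consist of edges inside X.\<close>
definition gconnected :: "'a set \<Rightarrow> 'a set set \<Rightarrow> bool" where
  "gconnected X F \<longleftrightarrow> (\<forall>x\<in>X. \<forall>y\<in>X. (x, y) \<in> (adj F)\<^sup>*)"

definition two_edge_connected :: "'a set \<Rightarrow> 'a set set \<Rightarrow> bool" where
  "two_edge_connected X F \<longleftrightarrow> gconnected X F \<and> (\<forall>e\<in>F. gconnected X (F - {e}))"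

definition two_vertex_connected :: "'a set \<Rightarrow> 'a set set \<Rightarrow> bool" where
  "two_vertex_connected V E \<longleftrightarrow> 3 \<le> card V \<and> gconnected V E \<and>
     (\<forall>x\<in>V. gconnected (V - {x}) {e\<in>E. x \<notin> e})"

definition two_vertex_cut :: "'a set \<Rightarrow> 'a set set \<Rightarrow> 'a \<Rightarrow> 'a \<Rightarrow> bool" where
  "two_vertex_cut V E x y \<longleftrightarrow> x \<in> V \<and> y \<in> V \<and> x \<noteq> y \<and>
     \<not> gconnected (V - {x, y}) {e\<in>E. x \<notin> e \<and> y \<notin> e}"

definition irrelevant_edge :: "'a set \<Rightarrow> 'a set set \<Rightarrow> 'a set \<Rightarrow> bool" where
  "irrelevant_edge V E e \<longleftrightarrow> e \<in> E \<and> (\<exists>x y. e = {x, y} \<and> two_vertex_cut V E x y)"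

definition induced_edges :: "'a set set \<Rightarrow> 'a set \<Rightarrow> 'a set set" where
  "induced_edges E S = {e\<in>E. e \<subseteq> S}"

text \<open>X is the node set of a 2EC component of K = (W, F): X carries a 2EC subgraph of K
  and is maximal with this property (single nodes are degenerate 2EC subgraphs).\<close>
definition has_2ec_subgraph_on :: "'a set \<Rightarrow> 'a set set \<Rightarrow> 'a set \<Rightarrow> bool" where
  "has_2ec_subgraph_on W F X \<longleftrightarrow> X \<subseteq> W \<and> X \<noteq> {} \<and>
     (\<exists>F'. F' \<subseteq> F \<and> (\<forall>e\<in>F'. e \<subseteq> X) \<and> two_edge_connected X F')"

definition is_2ec_comp :: "'a set \<Rightarrow> 'a set set \<Rightarrow> 'a set \<Rightarrow> bool" where
  "is_2ec_comp W F X \<longleftrightarrow> has_2ec_subgraph_on W F X \<and>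
     (\<forall>Y. X \<subset> Y \<longrightarrow> \<not> has_2ec_subgraph_on W F Y)"

text \<open>The contracted graph K': super-nodes and super-edges.\<close>
definition comps :: "'a set \<Rightarrow> 'a set set \<Rightarrow> 'a set set" where
  "comps W F = {X. is_2ec_comp W F X}"

definition comp_of :: "'a set \<Rightarrow> 'a set set \<Rightarrow> 'a \<Rightarrow> 'a set" where
  "comp_of W F x = (THE X. X \<in> comps W F \<and> x \<in> X)"

definition comp_edges :: "'a set \<Rightarrow> 'a set set \<Rightarrow> 'a set set set" where
  "comp_edges W F = {{X, Y} | X Y. X \<in> comps W F \<and> Y \<in> comps W F \<and> X \<noteq> Y \<and>
                         (\<exists>a\<in>X. \<exists>b\<in>Y. {a, b} \<in> F)}"

definition type_A :: "'a set \<Rightarrow> 'a set set \<Rightarrow> 'a \<Rightarrow> 'a \<Rightarrow> bool" where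
  "type_A W F u v \<longleftrightarrow> comps W F = {comp_of W F u} \<and> comp_of W F u = comp_of W F v
     \<and> comp_edges W F = {}"

definition type_B :: "'a set \<Rightarrow> 'a set set \<Rightarrow> 'a \<Rightarrow> 'a \<Rightarrow> bool" where
  "type_B W F u v \<longleftrightarrow> (\<exists>ps. distinct ps \<and> 2 \<le> length ps \<and>
     hd ps = comp_of W F u \<and> last ps = comp_of W F v \<and>
     set ps = comps W F \<and>
     comp_edges W F = {{ps ! i, ps ! Suc i} | i. Suc i < length ps})"

definition type_C :: "'a set \<Rightarrow> 'a set set \<Rightarrow> 'a \<Rightarrow> 'a \<Rightarrow> bool" where
  "type_C W F u v \<longleftrightarrow> comps W F = {comp_of W F u, comp_of W F v} \<and>
     comp_of W F u \<noteq> comp_of W F v \<and> comp_edges W F = {}"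

end

theory Submission
  imports Defs
begin

abbreviation R :: "'a set set \<Rightarrow> 'a \<Rightarrow> 'a \<Rightarrow> bool" where
  "R F x y \<equiv> (x, y) \<in> (adj F)\<^sup>*"

lemma adj_iff: "(a, b) \<in> adj F \<longleftrightarrow> {a, b} \<in> F" by (simp add: adj_def)

lemma R_sym: "R F x y \<Longrightarrow> R F y x"
proof -
  have "sym (adj F)" by (auto simp: sym_def adj_def insert_commute)
  then have "sym ((adj F)\<^sup>*)" by (rule sym_rtrancl)
  then show "R F x y \<Longrightarrow> R F y x" by (auto simp: sym_def)
qed

lemma R_mono: "F \<subseteq> F' \<Longrightarrow> R F x y \<Longrightarrow> R F' x y"
proof -
  assume "F \<subseteq> F'" "R F x y"
  have "adj F \<subseteq> adj F'" using \<open>F \<subseteq> F'\<close> by (auto simp: adj_def)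
  then show ?thesis using \<open>R F x y\<close> rtrancl_mono by blast
qed

lemma R_edge: "{a, b} \<in> F \<Longrightarrow> R F a b"
  by (simp add: adj_iff r_into_rtrancl)

lemma R_trans: "R F x y \<Longrightarrow> R F y z \<Longrightarrow> R F x z" by (rule rtrancl_trans)

lemma R_closed:
  assumes "R F x y" "x \<in> S" "\<And>a b. {a, b} \<in> F \<Longrightarrow> a \<in> S \<Longrightarrow> b \<in> S"
  shows "y \<in> S"
  using assms(1)
proof (induction rule: rtrancl_induct)
  case base then show ?case using assms(2) .
next
  case (step z w)
  then have "{z, w} \<in> F" by (simp add: adj_iff)
  then show ?case using assms(3) step.IH by blast
qed

lemma R_restrict:
  assumes "R F x y" "x \<in> S" "\<And>a b. {a, b} \<in> F \<Longrightarrow> a \<in> S \<Longrightarrow> b \<in> S"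
  shows "R {e\<in>F. e \<subseteq> S} x y"
  using assms(1)
proof (induction rule: rtrancl_induct)
  case base then show ?case by simp
next
  case (step z w)
  have "z \<in> S" using R_closed[OF step(1) assms(2)] assms(3) by blast
  moreover have "{z, w} \<in> F" using step(2) by (simp add: adj_iff)
  ultimately have "w \<in> S" using assms(3) by blast
  have "(z, w) \<in> adj {e\<in>F. e \<subseteq> S}" using \<open>z \<in> S\<close> \<open>w \<in> S\<close> \<open>{z,w} \<in> F\<close> by (simp add: adj_iff)
  then show ?case by (rule rtrancl_into_rtrancl[OF step.IH])
qed

lemma hub: "(\<And>z. z \<in> X \<Longrightarrow> R F z c) \<Longrightarrow> gconnected X F"
  unfolding gconnected_def
proof (intro ballI)
  fix x y assume "\<And>z. z \<in> X \<Longrightarrow> R F z c" "x \<in> X" "y \<in> X"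
  then have "R F x c" "R F y c" by auto
  then show "R F x y" using R_sym R_trans by metis
qed

lemma gconn_mono: "gconnected X F \<Longrightarrow> F \<subseteq> F' \<Longrightarrow> gconnected X F'"
  unfolding gconnected_def using R_mono[of F F'] by blast

lemma tec_minus: "two_edge_connected X F \<Longrightarrow> gconnected X (F - {e})"
proof -
  assume a: "two_edge_connected X F"
  show ?thesis
  proof (cases "e \<in> F")
    case True then show ?thesis using a unfolding two_edge_connected_def by blast
  next
    case False then have "F - {e} = F" by blast
    then show ?thesis using a unfolding two_edge_connected_def by simp
  qed
qed

lemma has_single: "x \<in> W \<Longrightarrow> has_2ec_subgraph_on W F {x}"
proof -
  assume "x \<in> W"
  have "two_edge_connected {x} {}" unfolding two_edge_connected_def gconnected_def by simp
  then show ?thesis unfolding has_2ec_subgraph_on_def using \<open>x \<in> W\<close> by blast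
qed

lemma has_union:
  assumes "has_2ec_subgraph_on W F X" "has_2ec_subgraph_on W F Y" "X \<inter> Y \<noteq> {}"
  shows "has_2ec_subgraph_on W F (X \<union> Y)"
proof -
  obtain F1 where F1: "F1 \<subseteq> F" "\<forall>e\<in>F1. e \<subseteq> X" "two_edge_connected X F1" "X \<subseteq> W"
    using assms(1) unfolding has_2ec_subgraph_on_def by blast
  obtain F2 where F2: "F2 \<subseteq> F" "\<forall>e\<in>F2. e \<subseteq> Y" "two_edge_connected Y F2" "Y \<subseteq> W"
    using assms(2) unfolding has_2ec_subgraph_on_def by blast
  obtain c where c: "c \<in> X" "c \<in> Y" using assms(3) by blast
  have gc: "gconnected (X \<union> Y) (F1 \<union> F2 - {e})" for e
  proof (rule hub[where c=c])
    fix z assume "z \<in> X \<union> Y"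
    then show "R (F1 \<union> F2 - {e}) z c"
    proof
      assume "z \<in> X"
      then have "R (F1 - {e}) z c" using tec_minus[OF F1(3)] c unfolding gconnected_def by blast
      then show ?thesis by (rule R_mono[rotated]) auto
    next
      assume "z \<in> Y"
      then have "R (F2 - {e}) z c" using tec_minus[OF F2(3)] c unfolding gconnected_def by blast
      then show ?thesis by (rule R_mono[rotated]) auto
    qed
  qed
  have "two_edge_connected (X \<union> Y) (F1 \<union> F2)"
    unfolding two_edge_connected_def using gconn_mono[OF gc[of "{}"]] gc by blast
  moreover have "F1 \<union> F2 \<subseteq> F" using F1(1) F2(1) by blast
  moreover have "\<forall>e\<in>F1 \<union> F2. e \<subseteq> X \<union> Y" using F1(2) F2(2) by blast
  moreover have "X \<union> Y \<subseteq> W" "X \<union> Y \<noteq> {}" using F1(4) F2(4) c by blast+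
  ultimately show ?thesis unfolding has_2ec_subgraph_on_def by blast
qed

lemma comp_unique:
  assumes "X \<in> comps W F" "Y \<in> comps W F" "x \<in> X" "x \<in> Y" shows "X = Y"
proof -
  have hX: "has_2ec_subgraph_on W F X" "\<forall>Z. X \<subset> Z \<longrightarrow> \<not> has_2ec_subgraph_on W F Z"
    using assms(1) unfolding comps_def is_2ec_comp_def by auto
  have hY: "has_2ec_subgraph_on W F Y" "\<forall>Z. Y \<subset> Z \<longrightarrow> \<not> has_2ec_subgraph_on W F Z"
    using assms(2) unfolding comps_def is_2ec_comp_def by auto
  have h: "has_2ec_subgraph_on W F (X \<union> Y)" using has_union[OF hX(1) hY(1)] assms(3,4) by blast
  have "\<not> X \<subset> X \<union> Y" "\<not> Y \<subset> X \<union> Y" using h hX(2) hY(2) by blast+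
  then show ?thesis by blast
qed

lemma comp_exists:
  assumes "finite W" "x \<in> W" shows "\<exists>X. X \<in> comps W F \<and> x \<in> X"
proof -
  let ?Q = "{Y. has_2ec_subgraph_on W F Y \<and> x \<in> Y}"
  have "?Q \<subseteq> Pow W" unfolding has_2ec_subgraph_on_def by auto
  then have "finite ?Q" using assms(1) finite_subset by blast
  moreover have "{x} \<in> ?Q" using has_single[OF assms(2)] by simp
  ultimately obtain m where m: "m \<in> ?Q" "\<forall>b\<in>?Q. m \<le> b \<longrightarrow> m = b"
    using finite_has_maximal[of ?Q] by blast
  have "is_2ec_comp W F m" unfolding is_2ec_comp_def
  proof (intro conjI allI impI)
    show "has_2ec_subgraph_on W F m" using m by simp
    fix Y assume "m \<subset> Y"
    then show "\<not> has_2ec_subgraph_on W F Y" using m by blast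
  qed
  then show ?thesis using m unfolding comps_def by blast
qed

lemma comp_of_props:
  assumes "finite W" "x \<in> W"
  shows "comp_of W F x \<in> comps W F" "x \<in> comp_of W F x"
proof -
  obtain X where X: "X \<in> comps W F" "x \<in> X" using comp_exists[OF assms] by blast
  have "comp_of W F x = X" unfolding comp_of_def
  proof (rule the_equality)
    show "X \<in> comps W F \<and> x \<in> X" using X by simp
    fix Y assume "Y \<in> comps W F \<and> x \<in> Y"
    then show "Y = X" using comp_unique[of Y W F X x] X by simp
  qed
  then show "comp_of W F x \<in> comps W F" "x \<in> comp_of W F x" using X by auto
qed

lemma comp_of_eq:
  assumes "X \<in> comps W F" "x \<in> X" shows "comp_of W F x = X"
  unfolding comp_of_def
proof (rule the_equality)
  show "X \<in> comps W F \<and> x \<in> X" using assms by simp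
  fix Y assume "Y \<in> comps W F \<and> x \<in> Y"
  then show "Y = X" using comp_unique[of Y W F X x] assms by simp
qed


lemma side_subset:
  assumes "two_edge_connected X F'" "F' \<subseteq> F" "X \<subseteq> A \<union> B" "A \<inter> B = {}"
    "\<forall>e'\<in>F. e' \<noteq> e \<longrightarrow> e' \<subseteq> A \<or> e' \<subseteq> B"
  shows "X \<subseteq> A \<or> X \<subseteq> B"
proof (cases "X = {}")
  case True then show ?thesis by simp
next
  case False
  then obtain x where x: "x \<in> X" by blast
  have gc: "gconnected X (F' - {e})" using tec_minus[OF assms(1)] .
  have edge: "{a,b} \<subseteq> A \<or> {a,b} \<subseteq> B" if "{a, b} \<in> F' - {e}" for a b
  proof -
    have 1: "{a,b} \<in> F" "{a,b} \<noteq> e" using that assms(2) by auto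
    show ?thesis using assms(5)[rule_format, OF 1] .
  qed
  have stayA: "y \<in> A" if "y \<in> X" "x \<in> A" for y
  proof -
    have "R (F' - {e}) x y" using gc x that(1) unfolding gconnected_def by simp
    then show ?thesis
    proof (rule R_closed)
      show "x \<in> A" by fact
      fix a b assume ab: "{a, b} \<in> F' - {e}" "a \<in> A"
      have "a \<notin> B" using ab(2) assms(4) by auto
      then show "b \<in> A" using edge[OF ab(1)] by simp
    qed
  qed
  have stayB: "y \<in> B" if "y \<in> X" "x \<in> B" for y
  proof -
    have "R (F' - {e}) x y" using gc x that(1) unfolding gconnected_def by simp
    then show ?thesis
    proof (rule R_closed)
      show "x \<in> B" by fact
      fix a b assume ab: "{a, b} \<in> F' - {e}" "a \<in> B"
      have "a \<notin> A" using ab(2) assms(4) by auto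
      then show "b \<in> B" using edge[OF ab(1)] by simp
    qed
  qed
  have "x \<in> A \<or> x \<in> B" using x assms(3) by blast
  then show ?thesis
  proof
    assume "x \<in> A" then have "X \<subseteq> A" using stayA by auto
    then show ?thesis by simp
  next
    assume "x \<in> B" then have "X \<subseteq> B" using stayB by auto
    then show ?thesis by simp
  qed
qed

lemma has_mono:
  assumes "has_2ec_subgraph_on A F1 X" "A \<subseteq> W" "F1 \<subseteq> F"
  shows "has_2ec_subgraph_on W F X"
  using assms unfolding has_2ec_subgraph_on_def by (meson order_trans)

lemma has_split:
  assumes "W = A \<union> B" "A \<inter> B = {}" "\<forall>e'\<in>F. e' \<noteq> e \<longrightarrow> e' \<subseteq> A \<or> e' \<subseteq> B"
  shows "has_2ec_subgraph_on W F X \<longleftrightarrow>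
    has_2ec_subgraph_on A {e\<in>F. e \<subseteq> A} X \<or> has_2ec_subgraph_on B {e\<in>F. e \<subseteq> B} X"
proof
  assume h: "has_2ec_subgraph_on W F X"
  then obtain F' where F': "F' \<subseteq> F" "\<forall>e\<in>F'. e \<subseteq> X" "two_edge_connected X F'" "X \<subseteq> W" "X \<noteq> {}"
    unfolding has_2ec_subgraph_on_def by blast
  have "X \<subseteq> A \<or> X \<subseteq> B" using side_subset[OF F'(3) F'(1) _ assms(2,3)] F'(4) assms(1) by blast
  then show "has_2ec_subgraph_on A {e\<in>F. e \<subseteq> A} X \<or> has_2ec_subgraph_on B {e\<in>F. e \<subseteq> B} X"
  proof
    assume XA: "X \<subseteq> A"
    have "F' \<subseteq> {e\<in>F. e \<subseteq> A}" using F'(1,2) XA by blast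
    then have "has_2ec_subgraph_on A {e\<in>F. e \<subseteq> A} X"
      unfolding has_2ec_subgraph_on_def using F' XA by blast
    then show ?thesis by simp
  next
    assume XB: "X \<subseteq> B"
    have "F' \<subseteq> {e\<in>F. e \<subseteq> B}" using F'(1,2) XB by blast
    then have "has_2ec_subgraph_on B {e\<in>F. e \<subseteq> B} X"
      unfolding has_2ec_subgraph_on_def using F' XB by blast
    then show ?thesis by simp
  qed
next
  assume "has_2ec_subgraph_on A {e\<in>F. e \<subseteq> A} X \<or> has_2ec_subgraph_on B {e\<in>F. e \<subseteq> B} X"
  then show "has_2ec_subgraph_on W F X"
  proof
    assume "has_2ec_subgraph_on A {e\<in>F. e \<subseteq> A} X"
    then show ?thesis by (rule has_mono) (use assms(1) in auto)
  next
    assume "has_2ec_subgraph_on B {e\<in>F. e \<subseteq> B} X"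
    then show ?thesis by (rule has_mono) (use assms(1) in auto)
  qed
qed

lemma has_sub: "has_2ec_subgraph_on W F X \<Longrightarrow> X \<subseteq> W \<and> X \<noteq> {}"
  unfolding has_2ec_subgraph_on_def by blast

lemma comps_split:
  assumes "W = A \<union> B" "A \<inter> B = {}" "\<forall>e'\<in>F. e' \<noteq> e \<longrightarrow> e' \<subseteq> A \<or> e' \<subseteq> B"
  shows "comps W F = comps A {e\<in>F. e \<subseteq> A} \<union> comps B {e\<in>F. e \<subseteq> B}"
proof -
  note hs = has_split[OF assms]
  have "is_2ec_comp W F X \<longleftrightarrow> is_2ec_comp A {e\<in>F. e \<subseteq> A} X \<or> is_2ec_comp B {e\<in>F. e \<subseteq> B} X" for X
  proof
    assume c: "is_2ec_comp W F X"
    then have hX: "has_2ec_subgraph_on W F X" and mx: "\<forall>Y. X \<subset> Y \<longrightarrow> \<not> has_2ec_subgraph_on W F Y"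
      unfolding is_2ec_comp_def by auto
    have mx': "\<not> has_2ec_subgraph_on A {e\<in>F. e \<subseteq> A} Y \<and> \<not> has_2ec_subgraph_on B {e\<in>F. e \<subseteq> B} Y"
      if "X \<subset> Y" for Y using mx hs that by blast
    from hX hs show "is_2ec_comp A {e\<in>F. e \<subseteq> A} X \<or> is_2ec_comp B {e\<in>F. e \<subseteq> B} X"
      unfolding is_2ec_comp_def using mx' by blast
  next
    assume "is_2ec_comp A {e\<in>F. e \<subseteq> A} X \<or> is_2ec_comp B {e\<in>F. e \<subseteq> B} X"
    then show "is_2ec_comp W F X"
    proof
      assume c: "is_2ec_comp A {e\<in>F. e \<subseteq> A} X"
      then have hX: "has_2ec_subgraph_on A {e\<in>F. e \<subseteq> A} X"
        and mx: "\<forall>Y. X \<subset> Y \<longrightarrow> \<not> has_2ec_subgraph_on A {e\<in>F. e \<subseteq> A} Y"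
        unfolding is_2ec_comp_def by auto
      have XA: "X \<subseteq> A" "X \<noteq> {}" using has_sub[OF hX] by auto
      show ?thesis unfolding is_2ec_comp_def
      proof (intro conjI allI impI)
        show "has_2ec_subgraph_on W F X" using hX hs by blast
        fix Y assume XY: "X \<subset> Y"
        show "\<not> has_2ec_subgraph_on W F Y"
        proof
          assume "has_2ec_subgraph_on W F Y"
          then have "has_2ec_subgraph_on A {e\<in>F. e \<subseteq> A} Y \<or> has_2ec_subgraph_on B {e\<in>F. e \<subseteq> B} Y"
            using hs by blast
          then show False
          proof
            assume "has_2ec_subgraph_on A {e\<in>F. e \<subseteq> A} Y" then show False using mx XY by blast
          next
            assume "has_2ec_subgraph_on B {e\<in>F. e \<subseteq> B} Y"
            then have "Y \<subseteq> B" using has_sub by blast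
            then show False using XY XA assms(2) by blast
          qed
        qed
      qed
    next
      assume c: "is_2ec_comp B {e\<in>F. e \<subseteq> B} X"
      then have hX: "has_2ec_subgraph_on B {e\<in>F. e \<subseteq> B} X"
        and mx: "\<forall>Y. X \<subset> Y \<longrightarrow> \<not> has_2ec_subgraph_on B {e\<in>F. e \<subseteq> B} Y"
        unfolding is_2ec_comp_def by auto
      have XB: "X \<subseteq> B" "X \<noteq> {}" using has_sub[OF hX] by auto
      show ?thesis unfolding is_2ec_comp_def
      proof (intro conjI allI impI)
        show "has_2ec_subgraph_on W F X" using hX hs by blast
        fix Y assume XY: "X \<subset> Y"
        show "\<not> has_2ec_subgraph_on W F Y"
        proof
          assume "has_2ec_subgraph_on W F Y"
          then have "has_2ec_subgraph_on A {e\<in>F. e \<subseteq> A} Y \<or> has_2ec_subgraph_on B {e\<in>F. e \<subseteq> B} Y"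
            using hs by blast
          then show False
          proof
            assume "has_2ec_subgraph_on B {e\<in>F. e \<subseteq> B} Y" then show False using mx XY by blast
          next
            assume "has_2ec_subgraph_on A {e\<in>F. e \<subseteq> A} Y"
            then have "Y \<subseteq> A" using has_sub by blast
            then show False using XY XB assms(2) by blast
          qed
        qed
      qed
    qed
  qed
  then show ?thesis unfolding comps_def by blast
qed

lemma comps_tec:
  assumes "two_edge_connected W F" "\<forall>e\<in>F. e \<subseteq> W" "W \<noteq> {}"
  shows "comps W F = {W}"
proof -
  have hW: "has_2ec_subgraph_on W F W" unfolding has_2ec_subgraph_on_def using assms by blast
  have cW: "is_2ec_comp W F W" unfolding is_2ec_comp_def
  proof (intro conjI allI impI)
    show "has_2ec_subgraph_on W F W" by (rule hW)
    fix Y assume "W \<subset> Y" then show "\<not> has_2ec_subgraph_on W F Y" using has_sub by blast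
  qed
  have "X = W" if "is_2ec_comp W F X" for X
  proof -
    have "X \<subseteq> W" using that has_sub unfolding is_2ec_comp_def by blast
    moreover have "\<not> X \<subset> W" using that hW unfolding is_2ec_comp_def by blast
    ultimately show ?thesis by blast
  qed
  then show ?thesis using cW unfolding comps_def by blast
qed

lemma comp_edges_single: "comps W F = {X} \<Longrightarrow> comp_edges W F = {}"
  unfolding comp_edges_def by auto


lemma comp_sub: "X \<in> comps W F \<Longrightarrow> X \<subseteq> W \<and> X \<noteq> {}"
  unfolding comps_def is_2ec_comp_def using has_sub by blast

definition pairs :: "'b list \<Rightarrow> 'b set set" where
  "pairs ps = {{ps ! i, ps ! Suc i} | i. Suc i < length ps}"

lemma pairs_single: "pairs [x] = {}" unfolding pairs_def by simp

lemma pairs_append: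
  assumes "xs \<noteq> []" "ys \<noteq> []"
  shows "pairs (xs @ ys) = pairs xs \<union> pairs ys \<union> {{last xs, hd ys}}"
proof
  let ?n = "length xs"
  have n0: "?n > 0" using assms(1) by simp
  show "pairs (xs @ ys) \<subseteq> pairs xs \<union> pairs ys \<union> {{last xs, hd ys}}"
  proof
    fix p assume "p \<in> pairs (xs @ ys)"
    then obtain i where i: "p = {(xs@ys) ! i, (xs@ys) ! Suc i}" "Suc i < length (xs @ ys)"
      unfolding pairs_def by blast
    consider "Suc i < ?n" | "Suc i = ?n" | "Suc i > ?n" by linarith
    then show "p \<in> pairs xs \<union> pairs ys \<union> {{last xs, hd ys}}"
    proof cases
      case 1
      then have "p = {xs ! i, xs ! Suc i}" using i(1) by (simp add: nth_append)
      then have "p \<in> pairs xs" unfolding pairs_def using 1 by blast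
      then show ?thesis by blast
    next
      case 2
      then have "i = ?n - 1" by simp
      then have "(xs@ys) ! i = last xs" using assms(1) by (simp add: nth_append last_conv_nth)
      moreover have "(xs@ys) ! Suc i = hd ys" using 2 assms(2) by (simp add: nth_append hd_conv_nth)
      ultimately show ?thesis using i(1) by simp
    next
      case 3
      define j where "j = i - ?n"
      have ij: "i = ?n + j" using 3 j_def by simp
      have "p = {ys ! j, ys ! Suc j}" using i(1) ij by (simp add: nth_append)
      moreover have "Suc j < length ys" using i(2) ij by simp
      ultimately have "p \<in> pairs ys" unfolding pairs_def by blast
      then show ?thesis by blast
    qed
  qed
  show "pairs xs \<union> pairs ys \<union> {{last xs, hd ys}} \<subseteq> pairs (xs @ ys)"
  proof
    fix p assume "p \<in> pairs xs \<union> pairs ys \<union> {{last xs, hd ys}}"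
    then consider "p \<in> pairs xs" | "p \<in> pairs ys" | "p = {last xs, hd ys}" by blast
    then show "p \<in> pairs (xs @ ys)"
    proof cases
      case 1
      then obtain i where i: "p = {xs ! i, xs ! Suc i}" "Suc i < ?n" unfolding pairs_def by blast
      then have "p = {(xs@ys) ! i, (xs@ys) ! Suc i}" by (simp add: nth_append)
      moreover have "Suc i < length (xs @ ys)" using i(2) by simp
      ultimately show ?thesis unfolding pairs_def by blast
    next
      case 2
      then obtain j where j: "p = {ys ! j, ys ! Suc j}" "Suc j < length ys" unfolding pairs_def by blast
      then have "p = {(xs@ys) ! (?n + j), (xs@ys) ! Suc (?n + j)}" by (simp add: nth_append)
      moreover have "Suc (?n + j) < length (xs @ ys)" using j(2) by simp
      ultimately show ?thesis unfolding pairs_def by blast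
    next
      case 3
      have "(xs@ys) ! (?n - 1) = last xs" using assms(1) by (simp add: nth_append last_conv_nth)
      moreover have "(xs@ys) ! Suc (?n - 1) = hd ys" using n0 assms(2) by (simp add: nth_append hd_conv_nth)
      moreover have "Suc (?n - 1) < length (xs @ ys)" using n0 assms(2) by simp
      ultimately show ?thesis unfolding pairs_def using 3 by (metis (mono_tags, lifting) mem_Collect_eq)
    qed
  qed
qed

lemma comp_of_split:
  assumes "comps W F = comps A FA \<union> comps B FB" "finite A" "x \<in> A"
  shows "comp_of W F x = comp_of A FA x"
proof -
  have "comp_of A FA x \<in> comps A FA" "x \<in> comp_of A FA x" using comp_of_props[OF assms(2,3)] by auto
  then show ?thesis using comp_of_eq[of "comp_of A FA x" W F x] assms(1) by blast
qed

lemma comp_edges_split: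
  assumes WAB: "W = A \<union> B" "A \<inter> B = {}" and fin: "finite W"
    and sp: "\<forall>e'\<in>F. e' \<noteq> e \<longrightarrow> e' \<subseteq> A \<or> e' \<subseteq> B"
    and e: "e = {a, b}" "a \<in> A" "b \<in> B" "e \<in> F"
  shows "comp_edges W F = comp_edges A {e\<in>F. e \<subseteq> A} \<union> comp_edges B {e\<in>F. e \<subseteq> B}
           \<union> {{comp_of A {e\<in>F. e \<subseteq> A} a, comp_of B {e\<in>F. e \<subseteq> B} b}}"
proof -
  let ?FA = "{e\<in>F. e \<subseteq> A}" and ?FB = "{e\<in>F. e \<subseteq> B}"
  have cs: "comps W F = comps A ?FA \<union> comps B ?FB" by (rule comps_split[OF WAB sp])
  have finA: "finite A" and finB: "finite B" using fin WAB(1) by auto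
  have ca: "comp_of W F a = comp_of A ?FA a" by (rule comp_of_split[OF cs finA e(2)])
  have cs': "comps W F = comps B ?FB \<union> comps A ?FA" using cs by blast
  have cb: "comp_of W F b = comp_of B ?FB b" by (rule comp_of_split[OF cs' finB e(3)])
  have caP: "comp_of A ?FA a \<in> comps A ?FA" "a \<in> comp_of A ?FA a" using comp_of_props[OF finA e(2)] by auto
  have cbP: "comp_of B ?FB b \<in> comps B ?FB" "b \<in> comp_of B ?FB b" using comp_of_props[OF finB e(3)] by auto
  have inA: "X \<in> comps A ?FA" if "X \<in> comps W F" "x \<in> X" "x \<in> A" for X x
  proof -
    have "X \<in> comps A ?FA \<or> X \<in> comps B ?FB" using that(1) cs by blast
    moreover have "X \<notin> comps B ?FB" using comp_sub[of X B ?FB] that(2,3) WAB(2) by blast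
    ultimately show ?thesis by blast
  qed
  have inB: "X \<in> comps B ?FB" if "X \<in> comps W F" "x \<in> X" "x \<in> B" for X x
  proof -
    have "X \<in> comps A ?FA \<or> X \<in> comps B ?FB" using that(1) cs by blast
    moreover have "X \<notin> comps A ?FA" using comp_sub[of X A ?FA] that(2,3) WAB(2) by blast
    ultimately show ?thesis by blast
  qed
  show ?thesis
  proof
    show "comp_edges W F \<subseteq> comp_edges A ?FA \<union> comp_edges B ?FB \<union> {{comp_of A ?FA a, comp_of B ?FB b}}"
    proof
      fix p assume "p \<in> comp_edges W F"
      then obtain X Y a' b' where p: "p = {X, Y}" "X \<in> comps W F" "Y \<in> comps W F" "X \<noteq> Y"
        "a' \<in> X" "b' \<in> Y" "{a', b'} \<in> F"
        unfolding comp_edges_def by blast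
      have Xc: "comp_of W F a' = X" by (rule comp_of_eq[OF p(2) p(5)])
      have Yc: "comp_of W F b' = Y" by (rule comp_of_eq[OF p(3) p(6)])
      show "p \<in> comp_edges A ?FA \<union> comp_edges B ?FB \<union> {{comp_of A ?FA a, comp_of B ?FB b}}"
      proof (cases "{a', b'} = e")
        case True
        then have "(a' = a \<and> b' = b) \<or> (a' = b \<and> b' = a)" using e(1) by (simp add: doubleton_eq_iff)
        then have "p = {comp_of W F a, comp_of W F b}" using p(1) Xc Yc by auto
        then show ?thesis using ca cb by simp
      next
        case False
        then have "{a', b'} \<subseteq> A \<or> {a', b'} \<subseteq> B" using sp[rule_format, OF p(7)] by simp
        then show ?thesis
        proof
          assume s: "{a', b'} \<subseteq> A"
          have "X \<in> comps A ?FA" "Y \<in> comps A ?FA" using inA[OF p(2) p(5)] inA[OF p(3) p(6)] s by auto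
          moreover have "{a', b'} \<in> ?FA" using s p(7) by simp
          ultimately have "p \<in> comp_edges A ?FA" unfolding comp_edges_def using p by blast
          then show ?thesis by blast
        next
          assume s: "{a', b'} \<subseteq> B"
          have "X \<in> comps B ?FB" "Y \<in> comps B ?FB" using inB[OF p(2) p(5)] inB[OF p(3) p(6)] s by auto
          moreover have "{a', b'} \<in> ?FB" using s p(7) by simp
          ultimately have "p \<in> comp_edges B ?FB" unfolding comp_edges_def using p by blast
          then show ?thesis by blast
        qed
      qed
    qed
    show "comp_edges A ?FA \<union> comp_edges B ?FB \<union> {{comp_of A ?FA a, comp_of B ?FB b}} \<subseteq> comp_edges W F"
    proof
      fix p assume "p \<in> comp_edges A ?FA \<union> comp_edges B ?FB \<union> {{comp_of A ?FA a, comp_of B ?FB b}}"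
      then consider "p \<in> comp_edges A ?FA" | "p \<in> comp_edges B ?FB" | "p = {comp_of A ?FA a, comp_of B ?FB b}"
        by blast
      then show "p \<in> comp_edges W F"
      proof cases
        case 1
        then obtain X Y a' b' where p: "p = {X, Y}" "X \<in> comps A ?FA" "Y \<in> comps A ?FA" "X \<noteq> Y"
          "a' \<in> X" "b' \<in> Y" "{a', b'} \<in> ?FA"
          unfolding comp_edges_def by blast
        then have "X \<in> comps W F" "Y \<in> comps W F" "{a', b'} \<in> F" using cs by auto
        then show ?thesis unfolding comp_edges_def using p by blast
      next
        case 2
        then obtain X Y a' b' where p: "p = {X, Y}" "X \<in> comps B ?FB" "Y \<in> comps B ?FB" "X \<noteq> Y"
          "a' \<in> X" "b' \<in> Y" "{a', b'} \<in> ?FB"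
          unfolding comp_edges_def by blast
        then have "X \<in> comps W F" "Y \<in> comps W F" "{a', b'} \<in> F" using cs by auto
        then show ?thesis unfolding comp_edges_def using p by blast
      next
        case 3
        have "comp_of A ?FA a \<subseteq> A" using comp_sub[OF caP(1)] by simp
        then have "comp_of A ?FA a \<noteq> comp_of B ?FB b" using cbP(2) e(3) WAB(2) by blast
        moreover have "comp_of A ?FA a \<in> comps W F" "comp_of B ?FB b \<in> comps W F" using caP cbP cs by auto
        moreover have "{a, b} \<in> F" using e by simp
        ultimately show ?thesis unfolding comp_edges_def using 3 caP(2) cbP(2) by blast
      qed
    qed
  qed
qed


definition edges_ok :: "'a set \<Rightarrow> 'a set set \<Rightarrow> bool" where
  "edges_ok W F \<longleftrightarrow> (\<forall>e\<in>F. \<exists>x y. e = {x, y} \<and> x \<noteq> y \<and> x \<in> W \<and> y \<in> W)"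

definition PT :: "'a set \<Rightarrow> 'a set set \<Rightarrow> 'a \<Rightarrow> 'a \<Rightarrow> bool" where
  "PT W F u v \<longleftrightarrow> (\<exists>ps. distinct ps \<and> ps \<noteq> [] \<and> hd ps = comp_of W F u \<and> last ps = comp_of W F v
     \<and> set ps = comps W F \<and> comp_edges W F = pairs ps)"

lemma edges_ok_sub: "edges_ok W F \<Longrightarrow> e \<in> F \<Longrightarrow> e \<subseteq> W"
proof -
  assume "edges_ok W F" "e \<in> F"
  then obtain x y where "e = {x, y}" "x \<in> W" "y \<in> W" unfolding edges_ok_def by blast
  then show ?thesis by simp
qed

lemma edges_ok_in: "edges_ok W F \<Longrightarrow> {x, y} \<in> F \<Longrightarrow> y \<in> W"
  using edges_ok_sub by fastforce

lemma edges_ok_ne: "edges_ok W F \<Longrightarrow> e \<in> F \<Longrightarrow> e \<noteq> {}"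
proof -
  assume "edges_ok W F" "e \<in> F"
  then obtain x y where "e = {x, y}" unfolding edges_ok_def by blast
  then show ?thesis by simp
qed

lemma one_edge:
  assumes "gconnected W F" "{a, b} \<in> F" "a \<in> W" "z \<in> W"
  shows "R (F - {{a, b}}) z a \<or> R (F - {{a, b}}) z b"
proof (rule ccontr)
  assume n: "\<not> (R (F - {{a, b}}) z a \<or> R (F - {{a, b}}) z b)"
  let ?T = "{y. R (F - {{a, b}}) z y}"
  have "R F z a" using assms(1,3,4) unfolding gconnected_def by blast
  then have "a \<in> ?T"
  proof (rule R_closed)
    show "z \<in> ?T" by simp
    fix x y assume xy: "{x, y} \<in> F" "x \<in> ?T"
    show "y \<in> ?T"
    proof (cases "{x, y} = {a, b}")
      case True
      then have "x = a \<or> x = b" by (auto simp: doubleton_eq_iff)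
      then show ?thesis using xy(2) n by auto
    next
      case False
      then have "(x, y) \<in> adj (F - {{a, b}})" using xy(1) by (simp add: adj_iff)
      then show ?thesis using xy(2) by (simp add: rtrancl_into_rtrancl)
    qed
  qed
  then show False using n by simp
qed

lemma side:
  assumes ok: "edges_ok W F" and gc: "gconnected W F"
    and hyp: "\<forall>e'\<in>F. R (F - {e'}) u v \<longrightarrow> gconnected W (F - {e'})"
    and e: "{a, b} \<in> F" "a \<in> W" "b \<in> W" "u \<in> W"
    and ua: "R (F - {{a, b}}) u a" and vb: "R (F - {{a, b}}) v b"
    and nuv: "\<not> R (F - {{a, b}}) u v"
    and A: "A = {z. R (F - {{a, b}}) u z}"
  shows "A \<subseteq> W" "b \<notin> A" "u \<in> A" "a \<in> A"
    "\<And>x y. {x, y} \<in> F - {{a, b}} \<Longrightarrow> x \<in> A \<Longrightarrow> y \<in> A"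
    "gconnected A {e\<in>F. e \<subseteq> A}"
    "\<forall>e'\<in>{e\<in>F. e \<subseteq> A}. R ({e\<in>F. e \<subseteq> A} - {e'}) u a \<longrightarrow> gconnected A ({e\<in>F. e \<subseteq> A} - {e'})"
    "edges_ok A {e\<in>F. e \<subseteq> A}"
proof -
  let ?E0 = "F - {{a, b}}" and ?FA = "{e\<in>F. e \<subseteq> A}"
  define B where "B = {z. R ?E0 v z}"
  show clA: "\<And>x y. {x, y} \<in> ?E0 \<Longrightarrow> x \<in> A \<Longrightarrow> y \<in> A"
  proof -
    fix x y assume "{x, y} \<in> ?E0" "x \<in> A"
    then have "(x, y) \<in> adj ?E0" "R ?E0 u x" using A by (auto simp: adj_iff)
    then show "y \<in> A" using A by (simp add: rtrancl_into_rtrancl)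
  qed
  have clB: "\<And>x y. {x, y} \<in> ?E0 \<Longrightarrow> x \<in> B \<Longrightarrow> y \<in> B"
  proof -
    fix x y assume "{x, y} \<in> ?E0" "x \<in> B"
    then have "(x, y) \<in> adj ?E0" "R ?E0 v x" using B_def by (auto simp: adj_iff)
    then show "y \<in> B" using B_def by (simp add: rtrancl_into_rtrancl)
  qed
  show AW: "A \<subseteq> W"
  proof
    fix z assume "z \<in> A"
    then have "R ?E0 u z" using A by simp
    then show "z \<in> W"
    proof (rule R_closed)
      show "u \<in> W" by fact
      fix x y assume "{x, y} \<in> ?E0" "x \<in> W"
      then show "y \<in> W" using edges_ok_in[OF ok] by blast
    qed
  qed
  show uA: "u \<in> A" using A by simp
  show aA: "a \<in> A" using A ua by simp
  have disj: "A \<inter> B = {}"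
  proof (rule ccontr)
    assume "A \<inter> B \<noteq> {}"
    then obtain z where "z \<in> A" "z \<in> B" by blast
    then have "R ?E0 u z" "R ?E0 v z" using A B_def by auto
    then have "R ?E0 u v" using R_sym R_trans by metis
    then show False using nuv by simp
  qed
  have bB: "b \<in> B" using B_def vb by simp
  show bA: "b \<notin> A" using disj bB by blast
  show "gconnected A ?FA"
  proof (rule hub[where c=u])
    fix z assume "z \<in> A"
    then have "R ?E0 u z" using A by simp
    then have "R {e\<in>?E0. e \<subseteq> A} u z" by (rule R_restrict[OF _ uA clA])
    then have "R ?FA u z" by (rule R_mono[rotated]) auto
    then show "R ?FA z u" by (rule R_sym)
  qed
  show "edges_ok A ?FA" unfolding edges_ok_def
  proof
    fix e assume "e \<in> ?FA"
    then have eF: "e \<in> F" "e \<subseteq> A" by auto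
    obtain x y where xy: "e = {x, y}" "x \<noteq> y" using ok eF(1) unfolding edges_ok_def by meson
    have "x \<in> A" "y \<in> A" using eF(2) xy(1) by auto
    then show "\<exists>x y. e = {x, y} \<and> x \<noteq> y \<and> x \<in> A \<and> y \<in> A" using xy by (intro exI conjI)
  qed
  show "\<forall>e'\<in>?FA. R (?FA - {e'}) u a \<longrightarrow> gconnected A (?FA - {e'})"
  proof (intro ballI impI)
    fix e' assume e': "e' \<in> ?FA" and pa: "R (?FA - {e'}) u a"
    have e'F: "e' \<in> F" "e' \<subseteq> A" using e' by auto
    have ne: "e' \<noteq> {a, b}" using e'F(2) bA by blast
    have e'B: "\<not> e' \<subseteq> B" using e'F(2) disj edges_ok_ne[OF ok e'F(1)] by blast
    have p1: "R (F - {e'}) u a" using pa by (rule R_mono[rotated]) auto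
    have p2: "R (F - {e'}) a b" using e(1) ne by (intro R_edge) simp
    have "R ?E0 b v" using vb by (rule R_sym)
    then have "R {e\<in>?E0. e \<subseteq> B} b v" by (rule R_restrict[OF _ bB clB])
    then have p3: "R (F - {e'}) b v" by (rule R_mono[rotated]) (use e'B in auto)
    have "R (F - {e'}) u v" using p1 p2 p3 R_trans by metis
    then have gW: "gconnected W (F - {e'})" using hyp[rule_format, OF e'F(1)] by simp
    show "gconnected A (?FA - {e'})"
    proof (rule hub[where c=u])
      fix z assume zA: "z \<in> A"
      have "{a, b} \<in> F - {e'}" using e(1) ne by simp
      moreover have "z \<in> W" using zA AW by (rule subsetD[rotated])
      ultimately have "R (F - {e'} - {{a, b}}) z a \<or> R (F - {e'} - {{a, b}}) z b"
        by (rule one_edge[OF gW _ e(2)])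
      moreover have "\<not> R (F - {e'} - {{a, b}}) z b"
      proof
        assume "R (F - {e'} - {{a, b}}) z b"
        then have "R ?E0 z b" by (rule R_mono[rotated]) auto
        then have "b \<in> A" using zA A by (simp add: rtrancl_trans)
        then show False using bA by simp
      qed
      ultimately have "R (F - {e'} - {{a, b}}) z a" by simp
      then have "R {e\<in>F - {e'} - {{a, b}}. e \<subseteq> A} z a"
        by (rule R_restrict[OF _ zA]) (rule clA, auto)
      then have "R (?FA - {e'}) z a" by (rule R_mono[rotated]) auto
      moreover have "R (?FA - {e'}) a u" using pa by (rule R_sym)
      ultimately show "R (?FA - {e'}) z u" by (rule R_trans)
    qed
  qed
qed

lemma path_type:
  assumes "finite W" "edges_ok W F" "u \<in> W" "v \<in> W" "gconnected W F"
    "\<forall>e\<in>F. R (F - {e}) u v \<longrightarrow> gconnected W (F - {e})"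
  shows "PT W F u v"
  using assms
proof (induction "card W" arbitrary: W F u v rule: less_induct)
  case less
  note fin = less.prems(1) and ok = less.prems(2) and uW = less.prems(3) and vW = less.prems(4)
    and gc = less.prems(5) and hyp = less.prems(6)
  show ?case
  proof (cases "\<forall>e\<in>F. gconnected W (F - {e})")
    case True
    then have tec: "two_edge_connected W F" using gc unfolding two_edge_connected_def by simp
    have sub: "\<forall>e\<in>F. e \<subseteq> W" using edges_ok_sub[OF ok] by blast
    have "W \<noteq> {}" using uW by auto
    then have cW: "comps W F = {W}" by (rule comps_tec[OF tec sub])
    have cu: "comp_of W F u = W" using comp_of_eq[of W W F u] cW uW by simp
    have cv: "comp_of W F v = W" using comp_of_eq[of W W F v] cW vW by simp
    have "comp_edges W F = {}" using comp_edges_single[OF cW] .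
    then show ?thesis unfolding PT_def using cW cu cv pairs_single[of W]
      by (intro exI[of _ "[W]"]) simp
  next
    case False
    then obtain e where eF: "e \<in> F" and ng: "\<not> gconnected W (F - {e})" by blast
    have nuv0: "\<not> R (F - {e}) u v" using hyp eF ng by blast
    obtain a0 b0 where ab0: "e = {a0, b0}" "a0 \<noteq> b0" "a0 \<in> W" "b0 \<in> W"
      using ok eF unfolding edges_ok_def by meson
    have key: "\<exists>a b. e = {a, b} \<and> a \<in> W \<and> b \<in> W \<and> R (F - {e}) u a \<and> R (F - {e}) v b"
    proof -
      have eu: "R (F - {e}) u a0 \<or> R (F - {e}) u b0" using one_edge[OF gc _ ab0(3) uW] eF ab0(1) by simp
      have ev: "R (F - {e}) v a0 \<or> R (F - {e}) v b0" using one_edge[OF gc _ ab0(3) vW] eF ab0(1) by simp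
      show ?thesis
      proof (cases "R (F - {e}) u a0")
        case True
        have "\<not> R (F - {e}) v a0"
        proof
          assume "R (F - {e}) v a0"
          then have "R (F - {e}) a0 v" by (rule R_sym)
          then show False using R_trans[OF True] nuv0 by blast
        qed
        then have "R (F - {e}) v b0" using ev by simp
        then show ?thesis using True ab0 by blast
      next
        case False
        then have ub: "R (F - {e}) u b0" using eu by simp
        have "\<not> R (F - {e}) v b0"
        proof
          assume "R (F - {e}) v b0"
          then have "R (F - {e}) b0 v" by (rule R_sym)
          then show False using R_trans[OF ub] nuv0 by blast
        qed
        then have "R (F - {e}) v a0" using ev by simp
        moreover have "e = {b0, a0}" using ab0(1) by (simp add: insert_commute)
        ultimately show ?thesis using ub ab0 by blast
      qed
    qed
    then obtain a b where ab: "e = {a, b}" "a \<in> W" "b \<in> W" and ua: "R (F - {e}) u a"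
      and vb: "R (F - {e}) v b" by blast
    have eba: "e = {b, a}" using ab(1) by (simp add: insert_commute)
    define A where "A = {z. R (F - {e}) u z}"
    define B where "B = {z. R (F - {e}) v z}"
    let ?FA = "{e\<in>F. e \<subseteq> A}" and ?FB = "{e\<in>F. e \<subseteq> B}"
    have abF: "{a, b} \<in> F" using eF ab(1) by simp
    have baF: "{b, a} \<in> F" using eF eba by simp
    have hyp': "\<forall>e'\<in>F. R (F - {e'}) v u \<longrightarrow> gconnected W (F - {e'})"
    proof (intro ballI impI)
      fix e' assume "e' \<in> F" "R (F - {e'}) v u"
      show "gconnected W (F - {e'})" using hyp[rule_format, OF \<open>e' \<in> F\<close> R_sym[OF \<open>R (F - {e'}) v u\<close>]] .
    qed
    have nvu0: "\<not> R (F - {e}) v u"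
    proof
      assume "R (F - {e}) v u" then show False using nuv0 R_sym[where F="F - {e}" and x=v and y=u] by simp
    qed
    note sA = side[OF ok gc hyp abF ab(2) ab(3) uW, folded ab(1), OF ua vb nuv0 A_def]
    note sB = side[OF ok gc hyp' baF ab(3) ab(2) vW, folded eba, OF vb ua nvu0 B_def]
    have AW: "A \<subseteq> W" and bnA: "b \<notin> A" and uA: "u \<in> A" and aA: "a \<in> A"
      and gA: "gconnected A ?FA" and okA: "edges_ok A ?FA"
      and hA: "\<forall>e'\<in>?FA. R (?FA - {e'}) u a \<longrightarrow> gconnected A (?FA - {e'})"
      using sA(1) sA(2) sA(3) sA(4) sA(6) sA(8) sA(7) by -
    have clA: "\<And>x y. {x, y} \<in> F - {e} \<Longrightarrow> x \<in> A \<Longrightarrow> y \<in> A" by (rule sA(5))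
    have BW: "B \<subseteq> W" and anB: "a \<notin> B" and vB: "v \<in> B" and bB: "b \<in> B"
      and gB: "gconnected B ?FB" and okB: "edges_ok B ?FB"
      and hB0: "\<forall>e'\<in>?FB. R (?FB - {e'}) v b \<longrightarrow> gconnected B (?FB - {e'})"
      using sB(1) sB(2) sB(3) sB(4) sB(6) sB(8) sB(7) by -
    have clB: "\<And>x y. {x, y} \<in> F - {e} \<Longrightarrow> x \<in> B \<Longrightarrow> y \<in> B" by (rule sB(5))
    have hB: "\<forall>e'\<in>?FB. R (?FB - {e'}) b v \<longrightarrow> gconnected B (?FB - {e'})"
    proof (intro ballI impI)
      fix e' assume "e' \<in> ?FB" "R (?FB - {e'}) b v"
      show "gconnected B (?FB - {e'})" using hB0[rule_format, OF \<open>e' \<in> ?FB\<close> R_sym[OF \<open>R (?FB - {e'}) b v\<close>]] .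
    qed
    have disj: "A \<inter> B = {}"
    proof (rule ccontr)
      assume "A \<inter> B \<noteq> {}"
      then obtain z where "z \<in> A" "z \<in> B" by blast
      then have "R (F - {e}) u z" "R (F - {e}) v z" unfolding A_def B_def by auto
      then have "R (F - {e}) u v" using R_sym[where F="F - {e}" and x=v and y=z] R_trans[where F="F - {e}" and x=u and y=z and z=v] by simp
      then show False using nuv0 by simp
    qed
    have WAB: "W = A \<union> B"
    proof
      show "A \<union> B \<subseteq> W" using AW BW by blast
      show "W \<subseteq> A \<union> B"
      proof
        fix z assume zW: "z \<in> W"
        have "R (F - {e}) z a \<or> R (F - {e}) z b" using one_edge[OF gc abF ab(2) zW] ab(1) by simp
        then show "z \<in> A \<union> B"
        proof
          assume "R (F - {e}) z a"
          then have "R (F - {e}) a z" by (rule R_sym)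
          then have "R (F - {e}) u z" by (rule R_trans[OF ua])
          then show ?thesis unfolding A_def by simp
        next
          assume "R (F - {e}) z b"
          then have "R (F - {e}) b z" by (rule R_sym)
          then have "R (F - {e}) v z" by (rule R_trans[OF vb])
          then show ?thesis unfolding B_def by simp
        qed
      qed
    qed
    have sp: "\<forall>e'\<in>F. e' \<noteq> e \<longrightarrow> e' \<subseteq> A \<or> e' \<subseteq> B"
    proof (intro ballI impI)
      fix e' assume e': "e' \<in> F" "e' \<noteq> e"
      obtain x y where xy: "e' = {x, y}" "x \<in> W" using ok e'(1) unfolding edges_ok_def by meson
      have xy': "{x, y} \<in> F - {e}" using e' xy(1) by simp
      have "x \<in> A \<union> B" using xy(2) WAB by (rule back_subst)
      then have "x \<in> A \<or> x \<in> B" by simp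
      then show "e' \<subseteq> A \<or> e' \<subseteq> B"
      proof
        assume "x \<in> A" then have "y \<in> A" using clA[OF xy'] by simp
        then show ?thesis using \<open>x \<in> A\<close> xy(1) by simp
      next
        assume "x \<in> B" then have "y \<in> B" using clB[OF xy'] by simp
        then show ?thesis using \<open>x \<in> B\<close> xy(1) by simp
      qed
    qed
    have finA: "finite A" and finB: "finite B" using fin WAB by auto
    have cA: "card A < card W" by (rule psubset_card_mono[OF fin]) (use AW bnA ab(3) in blast)
    have cB: "card B < card W" by (rule psubset_card_mono[OF fin]) (use BW anB ab(2) in blast)
    have "PT A ?FA u a" using less.hyps[OF cA finA okA uA aA gA hA] .
    then obtain ps1 where p1: "distinct ps1" "ps1 \<noteq> []" "hd ps1 = comp_of A ?FA u" "last ps1 = comp_of A ?FA a"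
      "set ps1 = comps A ?FA" "comp_edges A ?FA = pairs ps1" unfolding PT_def by blast
    have "PT B ?FB b v" using less.hyps[OF cB finB okB bB vB gB hB] .
    then obtain ps2 where p2: "distinct ps2" "ps2 \<noteq> []" "hd ps2 = comp_of B ?FB b" "last ps2 = comp_of B ?FB v"
      "set ps2 = comps B ?FB" "comp_edges B ?FB = pairs ps2" unfolding PT_def by blast
    have cs: "comps W F = comps A ?FA \<union> comps B ?FB" by (rule comps_split[OF WAB disj sp])
    have cs': "comps W F = comps B ?FB \<union> comps A ?FA" using cs by (simp add: Un_commute)
    have ce: "comp_edges W F = comp_edges A ?FA \<union> comp_edges B ?FB \<union> {{comp_of A ?FA a, comp_of B ?FB b}}"
      by (rule comp_edges_split[OF WAB disj fin sp ab(1) aA bB eF])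
    have cu: "comp_of W F u = comp_of A ?FA u" by (rule comp_of_split[OF cs finA uA])
    have cv: "comp_of W F v = comp_of B ?FB v" by (rule comp_of_split[OF cs' finB vB])
    have dj: "set ps1 \<inter> set ps2 = {}"
    proof (rule ccontr)
      assume "set ps1 \<inter> set ps2 \<noteq> {}"
      then obtain X where "X \<in> comps A ?FA" "X \<in> comps B ?FB" using p1(5) p2(5) by blast
      then have "X \<subseteq> A" "X \<subseteq> B" "X \<noteq> {}" using comp_sub by blast+
      then show False using disj by blast
    qed
    show ?thesis unfolding PT_def
    proof (intro exI[of _ "ps1 @ ps2"] conjI)
      show "distinct (ps1 @ ps2)" using p1(1) p2(1) dj by simp
      show "ps1 @ ps2 \<noteq> []" using p1(2) by simp
      show "hd (ps1 @ ps2) = comp_of W F u" using p1(2,3) cu by simp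
      show "last (ps1 @ ps2) = comp_of W F v" using p2(2,4) cv by simp
      show "set (ps1 @ ps2) = comps W F" using p1(5) p2(5) cs by simp
      show "comp_edges W F = pairs (ps1 @ ps2)"
        using ce pairs_append[OF p1(2) p2(2)] p1(4,6) p2(3,6) by simp
    qed
  qed
qed

lemma simple_in: "simple_graph V E \<Longrightarrow> {a, b} \<in> E \<Longrightarrow> a \<in> V \<and> b \<in> V"
proof -
  assume G: "simple_graph V E" "{a, b} \<in> E"
  then obtain x y where "{a, b} = {x, y}" "x \<in> V" "y \<in> V" unfolding simple_graph_def by blast
  then show ?thesis by (auto simp: doubleton_eq_iff)
qed

lemma ind_eq: "K \<inter> induced_edges E W = {e\<in>K \<inter> E. e \<subseteq> W}"
  unfolding induced_edges_def by blast

lemma edges_ok_ind: "simple_graph V E \<Longrightarrow> edges_ok W (K \<inter> induced_edges E W)"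
  unfolding edges_ok_def
proof
  fix e assume G: "simple_graph V E" and e: "e \<in> K \<inter> induced_edges E W"
  then have eE: "e \<in> E" and eW: "e \<subseteq> W" unfolding induced_edges_def by auto
  obtain x y where xy: "e = {x, y}" "x \<noteq> y" using G eE unfolding simple_graph_def by blast
  have "x \<in> W" "y \<in> W" using eW xy(1) by auto
  then show "\<exists>x y. e = {x, y} \<and> x \<noteq> y \<and> x \<in> W \<and> y \<in> W" using xy by blast
qed

lemma part_mem: "Vi \<union> Vj = V - {u, v} \<Longrightarrow> (x \<in> Vi \<or> x \<in> Vj) \<longleftrightarrow> (x \<in> V \<and> x \<noteq> u \<and> x \<noteq> v)"
proof -
  assume "Vi \<union> Vj = V - {u, v}"
  then have "x \<in> Vi \<union> Vj \<longleftrightarrow> x \<in> V - {u, v}" by simp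
  then show ?thesis by simp
qed

lemma reach_uv:
  assumes G: "simple_graph V E" and K: "K \<subseteq> E" "gconnected V K"
    and part: "Vi \<union> Vj = V - {u, v}" and ne: "\<forall>a\<in>Vi. \<forall>b\<in>Vj. {a, b} \<notin> E"
    and uv: "u \<in> V" "v \<in> V" and z: "z \<in> Vi \<union> {u, v}"
  shows "R (K \<inter> induced_edges E (Vi \<union> {u, v})) z u \<or> R (K \<inter> induced_edges E (Vi \<union> {u, v})) z v"
proof (rule ccontr)
  let ?W = "Vi \<union> {u, v}"
  let ?Ki = "K \<inter> induced_edges E ?W"
  define T where "T = {y. R ?Ki z y}"
  assume n: "\<not> (R ?Ki z u \<or> R ?Ki z v)"
  then have uT: "u \<notin> T" and vT: "v \<notin> T" unfolding T_def by auto
  have TW: "T \<subseteq> ?W"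
  proof
    fix y assume "y \<in> T"
    then have "R ?Ki z y" unfolding T_def by simp
    then show "y \<in> ?W"
    proof (rule R_closed)
      show "z \<in> ?W" by (rule z)
      fix a b assume "{a, b} \<in> ?Ki" "a \<in> ?W"
      then show "b \<in> ?W" unfolding induced_edges_def by blast
    qed
  qed
  have zV: "z \<in> V" using z part_mem[OF part, of z] uv by auto
  have "R K z u" using K(2) zV uv(1) unfolding gconnected_def by blast
  then have "u \<in> T"
  proof (rule R_closed)
    show "z \<in> T" unfolding T_def by simp
    fix a b assume ab: "{a, b} \<in> K" "a \<in> T"
    have aW: "a \<in> ?W" using ab(2) TW by (rule subsetD[rotated])
    have "a \<noteq> u" "a \<noteq> v" using ab(2) uT vT by auto
    then have aVi: "a \<in> Vi" using aW by simp
    have bV: "b \<in> V" using simple_in[OF G] ab(1) K(1) by blast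
    have "b \<notin> Vj" using ne aVi ab(1) K(1) by blast
    then have bW: "b \<in> ?W" using bV part_mem[OF part, of b] by auto
    have "{a, b} \<in> ?Ki" using ab(1) K(1) aW bW unfolding induced_edges_def by blast
    then have "(a, b) \<in> adj ?Ki" by (simp add: adj_iff)
    then show "b \<in> T" using ab(2) unfolding T_def by (simp add: rtrancl_into_rtrancl)
  qed
  then show False using uT by simp
qed


lemma glue:
  assumes G: "simple_graph V E" and K: "K \<subseteq> E" "gconnected V K"
    and part: "Vi \<union> Vj = V - {u, v}" and dis: "Vi \<inter> Vj = {}"
    and ne1: "\<forall>a\<in>Vi. \<forall>b\<in>Vj. {a, b} \<notin> E" and ne2: "\<forall>a\<in>Vj. \<forall>b\<in>Vi. {a, b} \<notin> E"
    and uv: "u \<in> V" "v \<in> V"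
  shows "R (K \<inter> induced_edges E (Vi \<union> {u, v})) u v \<or> R (K \<inter> induced_edges E (Vj \<union> {u, v})) u v"
proof (rule ccontr)
  let ?Wi = "Vi \<union> {u, v}" and ?Wj = "Vj \<union> {u, v}"
  let ?Ki = "K \<inter> induced_edges E ?Wi" and ?Kj = "K \<inter> induced_edges E ?Wj"
  define Ti where "Ti = {y. R ?Ki u y}"
  define Tj where "Tj = {y. R ?Kj u y}"
  assume n: "\<not> (R ?Ki u v \<or> R ?Kj u v)"
  then have vT: "v \<notin> Ti" "v \<notin> Tj" unfolding Ti_def Tj_def by auto
  have TiW: "Ti \<subseteq> ?Wi"
  proof
    fix y assume "y \<in> Ti"
    then have "R ?Ki u y" unfolding Ti_def by simp
    then show "y \<in> ?Wi"
    proof (rule R_closed)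
      show "u \<in> ?Wi" by simp
      fix a b assume "{a, b} \<in> ?Ki" "a \<in> ?Wi"
      then show "b \<in> ?Wi" unfolding induced_edges_def by blast
    qed
  qed
  have TjW: "Tj \<subseteq> ?Wj"
  proof
    fix y assume "y \<in> Tj"
    then have "R ?Kj u y" unfolding Tj_def by simp
    then show "y \<in> ?Wj"
    proof (rule R_closed)
      show "u \<in> ?Wj" by simp
      fix a b assume "{a, b} \<in> ?Kj" "a \<in> ?Wj"
      then show "b \<in> ?Wj" unfolding induced_edges_def by blast
    qed
  qed
  have "R K u v" using K(2) uv unfolding gconnected_def by blast
  then have "v \<in> Ti \<union> Tj"
  proof (rule R_closed)
    show "u \<in> Ti \<union> Tj" unfolding Ti_def by simp
    fix a b assume ab: "{a, b} \<in> K" "a \<in> Ti \<union> Tj"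
    have abV: "a \<in> V \<and> b \<in> V" using simple_in[OF G] ab(1) K(1) by blast
    have ca: "a \<in> Vi \<or> a \<in> Vj \<or> a = u \<or> a = v" using part_mem[OF part, of a] abV by auto
    have cb: "b \<in> Vi \<or> b \<in> Vj \<or> b = u \<or> b = v" using part_mem[OF part, of b] abV by auto
    have n1: "\<not> (a \<in> Vi \<and> b \<in> Vj)" using ne1 ab(1) K(1) by blast
    have n2: "\<not> (a \<in> Vj \<and> b \<in> Vi)" using ne2 ab(1) K(1) by blast
    have "{a, b} \<subseteq> ?Wi \<or> {a, b} \<subseteq> ?Wj" using ca cb n1 n2 by auto
    then show "b \<in> Ti \<union> Tj"
    proof
      assume s: "{a, b} \<subseteq> ?Wi"
      then have "{a, b} \<in> ?Ki" using ab(1) K(1) unfolding induced_edges_def by blast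
      then have e: "(a, b) \<in> adj ?Ki" by (simp add: adj_iff)
      have "a \<in> Ti"
      proof (cases "a \<in> Ti")
        case False
        then have "a \<in> Tj" using ab(2) by simp
        then have "a \<in> ?Wj" using TjW by (rule subsetD[rotated])
        moreover have "a \<in> ?Wi" using s by simp
        ultimately have "a = u \<or> a = v" using dis by auto
        moreover have "a \<noteq> v" using vT \<open>a \<in> Tj\<close> by auto
        ultimately have "a = u" by simp
        then show ?thesis unfolding Ti_def by simp
      qed simp
      then show ?thesis using e unfolding Ti_def by (simp add: rtrancl_into_rtrancl)
    next
      assume s: "{a, b} \<subseteq> ?Wj"
      then have "{a, b} \<in> ?Kj" using ab(1) K(1) unfolding induced_edges_def by blast
      then have e: "(a, b) \<in> adj ?Kj" by (simp add: adj_iff)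
      have "a \<in> Tj"
      proof (cases "a \<in> Tj")
        case False
        then have "a \<in> Ti" using ab(2) by simp
        then have "a \<in> ?Wi" using TiW by (rule subsetD[rotated])
        moreover have "a \<in> ?Wj" using s by simp
        ultimately have "a = u \<or> a = v" using dis by auto
        moreover have "a \<noteq> v" using vT \<open>a \<in> Ti\<close> by auto
        ultimately have "a = u" by simp
        then show ?thesis unfolding Tj_def by simp
      qed simp
      then show ?thesis using e unfolding Tj_def by (simp add: rtrancl_into_rtrancl)
    qed
  qed
  then show False using vT by simp
qed

lemma sideC:
  assumes sub: "\<forall>e\<in>F. e \<subseteq> W" and nxy: "\<not> R F x y"
    and rm: "\<forall>e\<in>F. \<forall>z\<in>W. R (F - {e}) z x \<or> R (F - {e}) z y"
    and xW: "x \<in> W" and A: "A = {z. R F x z}"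
  shows "two_edge_connected A {e\<in>F. e \<subseteq> A}" "A \<subseteq> W" "x \<in> A" "y \<notin> A"
    "\<And>a b. {a, b} \<in> F \<Longrightarrow> a \<in> A \<Longrightarrow> b \<in> A"
proof -
  show xA: "x \<in> A" using A by simp
  show yA: "y \<notin> A" using A nxy by simp
  show cl: "\<And>a b. {a, b} \<in> F \<Longrightarrow> a \<in> A \<Longrightarrow> b \<in> A"
  proof -
    fix a b assume "{a, b} \<in> F" "a \<in> A"
    then have "(a, b) \<in> adj F" "R F x a" using A by (auto simp: adj_iff)
    then show "b \<in> A" using A by (simp add: rtrancl_into_rtrancl)
  qed
  show AW: "A \<subseteq> W"
  proof
    fix z assume "z \<in> A"
    then have "R F x z" using A by simp
    then show "z \<in> W"
    proof (rule R_closed)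
      show "x \<in> W" by (rule xW)
      fix a b assume "{a, b} \<in> F" "a \<in> W"
      then show "b \<in> W" using sub by blast
    qed
  qed
  have gc: "gconnected A {e\<in>F. e \<subseteq> A}"
  proof (rule hub[where c=x])
    fix z assume "z \<in> A"
    then have "R F x z" using A by simp
    then have "R {e\<in>F. e \<subseteq> A} x z" by (rule R_restrict[OF _ xA cl])
    then show "R {e\<in>F. e \<subseteq> A} z x" by (rule R_sym)
  qed
  have "gconnected A ({e\<in>F. e \<subseteq> A} - {e})" if eA: "e \<in> {e\<in>F. e \<subseteq> A}" for e
  proof (rule hub[where c=x])
    fix z assume zA: "z \<in> A"
    have eF: "e \<in> F" using eA by simp
    have zW: "z \<in> W" using zA AW by (rule subsetD[rotated])
    have "R (F - {e}) z x \<or> R (F - {e}) z y" using rm eF zW by blast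
    moreover have "\<not> R (F - {e}) z y"
    proof
      assume "R (F - {e}) z y"
      then have "R F z y" by (rule R_mono[rotated]) auto
      moreover have "R F x z" using zA A by simp
      ultimately have "R F x y" by (rule R_trans[rotated])
      then show False using nxy by simp
    qed
    ultimately have "R (F - {e}) z x" by simp
    then have "R {e'\<in>F - {e}. e' \<subseteq> A} z x" by (rule R_restrict[OF _ zA]) (rule cl, auto)
    then show "R ({e\<in>F. e \<subseteq> A} - {e}) z x" by (rule R_mono[rotated]) auto
  qed
  then show "two_edge_connected A {e\<in>F. e \<subseteq> A}" using gc unfolding two_edge_connected_def by blast
qed

lemma typeC_of:
  assumes fin: "finite W" and WAB: "W = A \<union> B" and dis: "A \<inter> B = {}" and uA: "u \<in> A" and vB: "v \<in> B"
    and sp: "\<forall>e\<in>F. e \<subseteq> A \<or> e \<subseteq> B"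
    and tA: "two_edge_connected A {e\<in>F. e \<subseteq> A}" and tB: "two_edge_connected B {e\<in>F. e \<subseteq> B}"
  shows "type_C W F u v"
proof -
  have sp': "\<forall>e'\<in>F. e' \<noteq> {} \<longrightarrow> e' \<subseteq> A \<or> e' \<subseteq> B" using sp by blast
  have cs: "comps W F = comps A {e\<in>F. e \<subseteq> A} \<union> comps B {e\<in>F. e \<subseteq> B}"
    by (rule comps_split[OF WAB dis sp'])
  have "A \<noteq> {}" using uA by auto
  then have cA: "comps A {e\<in>F. e \<subseteq> A} = {A}" by (intro comps_tec[OF tA]) auto
  have "B \<noteq> {}" using vB by auto
  then have cB: "comps B {e\<in>F. e \<subseteq> B} = {B}" by (intro comps_tec[OF tB]) auto
  have c: "comps W F = {A, B}" using cs cA cB by (simp add: insert_commute)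
  have cu: "comp_of W F u = A" by (rule comp_of_eq) (use c uA in auto)
  have cv: "comp_of W F v = B" by (rule comp_of_eq) (use c vB in auto)
  have AB: "A \<noteq> B" using uA dis by auto
  have ce: "comp_edges W F = {}"
  proof (rule ccontr)
    assume "comp_edges W F \<noteq> {}"
    then obtain p where "p \<in> comp_edges W F" by blast
    then obtain X Y a' b' where p: "X \<in> comps W F" "Y \<in> comps W F" "X \<noteq> Y"
        "a' \<in> X" "b' \<in> Y" "{a', b'} \<in> F"
      unfolding comp_edges_def by blast
    have XY: "X = A \<or> X = B" "Y = A \<or> Y = B" using p(1,2) c by auto
    have "{a', b'} \<subseteq> A \<or> {a', b'} \<subseteq> B" using sp p(6) by blast
    then show False
    proof
      assume s: "{a', b'} \<subseteq> A"
      have "X = A" using XY(1) p(4) s dis by auto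
      moreover have "Y = A" using XY(2) p(5) s dis by auto
      ultimately show False using p(3) by simp
    next
      assume s: "{a', b'} \<subseteq> B"
      have "X = B" using XY(1) p(4) s dis by auto
      moreover have "Y = B" using XY(2) p(5) s dis by auto
      ultimately show False using p(3) by simp
    qed
  qed
  show ?thesis unfolding type_C_def using c cu cv AB ce by simp
qed

lemma PT_AB:
  assumes "PT W F u v"
  shows "(type_A W F u v \<or> type_B W F u v) \<and> \<not> type_C W F u v"
proof -
  obtain ps where p: "distinct ps" "ps \<noteq> []" "hd ps = comp_of W F u" "last ps = comp_of W F v"
    "set ps = comps W F" "comp_edges W F = pairs ps" using assms unfolding PT_def by blast
  show ?thesis
  proof (cases "length ps = 1")
    case True
    then obtain X where X: "ps = [X]" by (cases ps) auto
    have A: "type_A W F u v" unfolding type_A_def using p X pairs_single[of X] by simp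
    have "comp_of W F u = comp_of W F v" using p X by simp
    then have "\<not> type_C W F u v" unfolding type_C_def by simp
    then show ?thesis using A by simp
  next
    case False
    then have len: "2 \<le> length ps" using p(2) by (cases ps) (auto simp: Suc_le_eq)
    have B: "type_B W F u v" unfolding type_B_def using p len unfolding pairs_def by blast
    have "{ps ! 0, ps ! Suc 0} \<in> pairs ps" unfolding pairs_def using len by force
    then have "comp_edges W F \<noteq> {}" using p(6) by auto
    then have "\<not> type_C W F u v" unfolding type_C_def by simp
    then show ?thesis using B by simp
  qed
qed


lemma cross:
  assumes G: "simple_graph V E" and gx: "gconnected (V - {x}) {e\<in>E. x \<notin> e}"
    and part: "Vi \<union> Vj = V - {x, y}" and dis: "Vi \<inter> Vj = {}" and Vj: "Vj \<noteq> {}"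
    and ne: "\<forall>a\<in>Vi. \<forall>b\<in>Vj. {a, b} \<notin> E"
    and WAB: "A \<union> B = Vi \<union> {x, y}" and AB: "A \<inter> B = {}" and yB: "y \<in> B"
    and zA: "z \<in> A" "z \<in> Vi"
  shows "\<exists>a\<in>A. \<exists>b\<in>B. {a, b} \<in> E"
proof (rule ccontr)
  assume n: "\<not> (\<exists>a\<in>A. \<exists>b\<in>B. {a, b} \<in> E)"
  obtain w where w: "w \<in> Vj" using Vj by blast
  have wV: "w \<in> V" "w \<noteq> x" using part_mem[OF part, of w] w by auto
  have zV: "z \<in> V" "z \<noteq> x" using part_mem[OF part, of z] zA(2) by auto
  have "R {e\<in>E. x \<notin> e} z w" using gx wV zV unfolding gconnected_def by blast
  then have "w \<in> A - {x}"
  proof (rule R_closed)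
    show "z \<in> A - {x}" using zA zV by simp
    fix a b assume ab: "{a, b} \<in> {e\<in>E. x \<notin> e}" "a \<in> A - {x}"
    have abE: "{a, b} \<in> E" and bx: "b \<noteq> x" using ab(1) by auto
    have aW: "a \<in> Vi \<union> {x, y}" using ab(2) WAB by blast
    have ay: "a \<noteq> y" using ab(2) AB yB by blast
    have aVi: "a \<in> Vi" using aW ab(2) ay by simp
    have bV: "b \<in> V" using simple_in[OF G abE] by simp
    have "b \<notin> Vj" using ne aVi abE by blast
    then have "b \<in> Vi \<union> {x, y}" using part_mem[OF part, of b] bV by auto
    then have "b \<in> A \<union> B" using WAB by simp
    moreover have "b \<notin> B" using n ab(2) abE by blast
    ultimately show "b \<in> A - {x}" using bx by simp
  qed
  then have "w \<in> Vi \<union> {x, y}" using WAB by blast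
  then show False using w dis wV part_mem[OF part, of w] by auto
qed


lemma main_side:
  assumes G: "simple_graph V E" and conn: "two_vertex_connected V E"
    and uV: "u \<in> V" "v \<in> V" "u \<noteq> v"
    and part: "Vi \<noteq> {}" "Vj \<noteq> {}" "Vi \<union> Vj = V - {u, v}" "Vi \<inter> Vj = {}"
    and ne1: "\<forall>a\<in>Vi. \<forall>b\<in>Vj. {a, b} \<notin> E" and ne2: "\<forall>a\<in>Vj. \<forall>b\<in>Vi. {a, b} \<notin> E"
    and H: "H \<subseteq> E" "two_edge_connected V H"
  shows "(type_A (Vi \<union> {u, v}) (H \<inter> induced_edges E (Vi \<union> {u, v})) u v
      \<or> type_B (Vi \<union> {u, v}) (H \<inter> induced_edges E (Vi \<union> {u, v})) u v
      \<or> type_C (Vi \<union> {u, v}) (H \<inter> induced_edges E (Vi \<union> {u, v})) u v)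
   \<and> (type_C (Vi \<union> {u, v}) (H \<inter> induced_edges E (Vi \<union> {u, v})) u v
      \<longrightarrow> type_A (Vj \<union> {u, v}) (H \<inter> induced_edges E (Vj \<union> {u, v})) u v)
   \<and> (type_C (Vi \<union> {u, v}) (H \<inter> induced_edges E (Vi \<union> {u, v})) u v
      \<longrightarrow> (\<exists>f\<in>induced_edges E (Vi \<union> {u, v}).
             type_B (Vi \<union> {u, v}) (H \<inter> induced_edges E (Vi \<union> {u, v}) \<union> {f}) u v)
        \<and> (\<exists>H'. H' \<subseteq> E \<and> two_edge_connected V H' \<and>
             (type_A (Vi \<union> {u, v}) (H' \<inter> induced_edges E (Vi \<union> {u, v})) u v
              \<or> type_B (Vi \<union> {u, v}) (H' \<inter> induced_edges E (Vi \<union> {u, v})) u v)))"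
proof -
  let ?W = "Vi \<union> {u, v}" and ?Wj = "Vj \<union> {u, v}"
  let ?Fi = "H \<inter> induced_edges E ?W" and ?Fj = "H \<inter> induced_edges E ?Wj"
  have finV: "finite V" using G unfolding simple_graph_def by simp
  have ViV: "Vi \<subseteq> V" using part_mem[OF part(3)] by blast
  have VjV: "Vj \<subseteq> V" using part_mem[OF part(3)] by blast
  have WV: "?W \<subseteq> V" using ViV uV by blast
  have finW: "finite ?W" using finite_subset[OF WV finV] .
  have uW: "u \<in> ?W" and vW: "v \<in> ?W" by auto
  have part': "Vj \<union> Vi = V - {u, v}" using part(3) by (simp add: Un_commute)
  have okW: "edges_ok ?W ?Fi" by (rule edges_ok_ind[OF G])
  have subFi: "\<forall>e\<in>?Fi. e \<subseteq> ?W" unfolding induced_edges_def by blast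
  have gH: "gconnected V H" using H(2) unfolding two_edge_connected_def by simp
  have gHe: "gconnected V (H - {e})" if "e \<in> H" for e using H(2) that unfolding two_edge_connected_def by blast
  have ra: "\<forall>z\<in>?W. R ?Fi z u \<or> R ?Fi z v"
    using reach_uv[OF G H(1) gH part(3) ne1 uV(1,2)] by blast
  have rm: "\<forall>e\<in>?Fi. \<forall>z\<in>?W. R (?Fi - {e}) z u \<or> R (?Fi - {e}) z v"
  proof (intro ballI)
    fix e z assume e: "e \<in> ?Fi" and z: "z \<in> ?W"
    have eH: "e \<in> H" using e by simp
    have HeE: "H - {e} \<subseteq> E" using H(1) by blast
    have eq: "(H - {e}) \<inter> induced_edges E ?W = ?Fi - {e}" by blast
    show "R (?Fi - {e}) z u \<or> R (?Fi - {e}) z v"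
      using reach_uv[OF G HeE gHe[OF eH] part(3) ne1 uV(1,2) z] unfolding eq .
  qed
  show ?thesis
  proof (cases "R ?Fi u v")
    case True
    have vu: "R ?Fi v u" using True by (rule R_sym)
    have gc: "gconnected ?W ?Fi"
    proof (rule hub[where c=u])
      fix z assume "z \<in> ?W"
      then have "R ?Fi z u \<or> R ?Fi z v" using ra by blast
      then show "R ?Fi z u"
      proof
        assume "R ?Fi z v" then show ?thesis using vu by (rule R_trans)
      qed
    qed
    have hyp: "\<forall>e\<in>?Fi. R (?Fi - {e}) u v \<longrightarrow> gconnected ?W (?Fi - {e})"
    proof (intro ballI impI)
      fix e assume e: "e \<in> ?Fi" and p: "R (?Fi - {e}) u v"
      show "gconnected ?W (?Fi - {e})"
      proof (rule hub[where c=u])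
        fix z assume "z \<in> ?W"
        then have "R (?Fi - {e}) z u \<or> R (?Fi - {e}) z v" using rm e by blast
        then show "R (?Fi - {e}) z u"
        proof
          assume "R (?Fi - {e}) z v" then show ?thesis using R_sym[OF p] by (rule R_trans)
        qed
      qed
    qed
    have "PT ?W ?Fi u v" by (rule path_type[OF finW okW uW vW gc hyp])
    then have AB: "(type_A ?W ?Fi u v \<or> type_B ?W ?Fi u v) \<and> \<not> type_C ?W ?Fi u v" by (rule PT_AB)
    then show ?thesis by simp
  next
    case False
    define A where "A = {z. R ?Fi u z}"
    define B where "B = {z. R ?Fi v z}"
    have nvu: "\<not> R ?Fi v u"
    proof
      assume "R ?Fi v u" then show False using False R_sym[of v u ?Fi] by simp
    qed
    have rm': "\<forall>e\<in>?Fi. \<forall>z\<in>?W. R (?Fi - {e}) z v \<or> R (?Fi - {e}) z u" using rm by blast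
    note sA = sideC[OF subFi False rm uW A_def]
    note sB = sideC[OF subFi nvu rm' vW B_def]
    have uA: "u \<in> A" and vB: "v \<in> B" using sA(3) sB(3) by -
    have AW: "A \<subseteq> ?W" and BW: "B \<subseteq> ?W" using sA(2) sB(2) by -
    have dis: "A \<inter> B = {}"
    proof (rule ccontr)
      assume "A \<inter> B \<noteq> {}"
      then obtain z where "z \<in> A" "z \<in> B" by blast
      then have "R ?Fi u z" "R ?Fi v z" unfolding A_def B_def by auto
      then have "R ?Fi u v" using R_sym[of v z ?Fi] R_trans[of u z ?Fi v] by simp
      then show False using False by simp
    qed
    have WAB: "?W = A \<union> B"
    proof
      show "A \<union> B \<subseteq> ?W" using AW BW by (rule Un_least)
      show "?W \<subseteq> A \<union> B"
      proof
        fix z assume "z \<in> ?W"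
        then have "R ?Fi z u \<or> R ?Fi z v" using ra by blast
        then show "z \<in> A \<union> B"
        proof
          assume "R ?Fi z u" then have "R ?Fi u z" by (rule R_sym)
          then show ?thesis unfolding A_def by simp
        next
          assume "R ?Fi z v" then have "R ?Fi v z" by (rule R_sym)
          then show ?thesis unfolding B_def by simp
        qed
      qed
    qed
    have sp: "\<forall>e\<in>?Fi. e \<subseteq> A \<or> e \<subseteq> B"
    proof
      fix e assume e: "e \<in> ?Fi"
      obtain x y where xy: "e = {x, y}" "x \<in> ?W" using okW e unfolding edges_ok_def by meson
      have exy: "{x, y} \<in> ?Fi" using e xy(1) by simp
      have "x \<in> A \<union> B" using xy(2) WAB by (rule back_subst)
      then show "e \<subseteq> A \<or> e \<subseteq> B"
      proof
        assume "x \<in> A" then have "y \<in> A" using sA(5)[OF exy] by simp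
        then show ?thesis using \<open>x \<in> A\<close> xy(1) by simp
      next
        assume "x \<in> B" then have "y \<in> B" using sB(5)[OF exy] by simp
        then show ?thesis using \<open>x \<in> B\<close> xy(1) by simp
      qed
    qed
    have tC: "type_C ?W ?Fi u v" by (rule typeC_of[OF finW WAB dis uA vB sp sA(1) sB(1)])
    have gj: "gconnected ?Wj (K \<inter> induced_edges E ?Wj)" if K: "K \<subseteq> H" "gconnected V K" for K
    proof -
      have KE: "K \<subseteq> E" using K(1) H(1) by blast
      have "R (K \<inter> induced_edges E ?W) u v \<or> R (K \<inter> induced_edges E ?Wj) u v"
        by (rule glue[OF G KE K(2) part(3) part(4) ne1 ne2 uV(1,2)])
      moreover have "\<not> R (K \<inter> induced_edges E ?W) u v"
      proof
        assume "R (K \<inter> induced_edges E ?W) u v"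
        then have "R ?Fi u v" by (rule R_mono[rotated]) (use K(1) in blast)
        then show False using False by simp
      qed
      ultimately have uvj: "R (K \<inter> induced_edges E ?Wj) u v" by simp
      show ?thesis
      proof (rule hub[where c=u])
        fix z assume z: "z \<in> ?Wj"
        have "R (K \<inter> induced_edges E ?Wj) z u \<or> R (K \<inter> induced_edges E ?Wj) z v"
          by (rule reach_uv[OF G KE K(2) part' ne2 uV(1,2) z])
        then show "R (K \<inter> induced_edges E ?Wj) z u"
        proof
          assume "R (K \<inter> induced_edges E ?Wj) z v"
          then show ?thesis using R_sym[OF uvj] by (rule R_trans)
        qed
      qed
    qed
    have tecj: "two_edge_connected ?Wj ?Fj" unfolding two_edge_connected_def
    proof (intro conjI ballI)
      show "gconnected ?Wj ?Fj" using gj[OF order_refl gH] .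
      fix e assume e: "e \<in> ?Fj"
      have eH: "e \<in> H" using e by simp
      have eq: "(H - {e}) \<inter> induced_edges E ?Wj = ?Fj - {e}" by blast
      show "gconnected ?Wj (?Fj - {e})" using gj[OF _ gHe[OF eH]] unfolding eq by blast
    qed
    have subFj: "\<forall>e\<in>?Fj. e \<subseteq> ?Wj" unfolding induced_edges_def by blast
    have cj: "comps ?Wj ?Fj = {?Wj}" by (rule comps_tec[OF tecj subFj]) simp
    have cju: "comp_of ?Wj ?Fj u = ?Wj" by (rule comp_of_eq) (use cj in auto)
    have cjv: "comp_of ?Wj ?Fj v = ?Wj" by (rule comp_of_eq) (use cj in auto)
    have tAj: "type_A ?Wj ?Fj u v" unfolding type_A_def
      using cj cju cjv comp_edges_single[OF cj] by simp
    obtain z where zVi: "z \<in> Vi" using part(1) by blast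
    have zW: "z \<in> A \<union> B" using WAB zVi by blast
    have WAB': "A \<union> B = Vi \<union> {u, v}" using WAB by simp
    have "\<exists>a\<in>A. \<exists>b\<in>B. {a, b} \<in> E"
    proof (cases "z \<in> A")
      case True
      have gu: "gconnected (V - {u}) {e\<in>E. u \<notin> e}" using conn uV(1) unfolding two_vertex_connected_def by blast
      show ?thesis by (rule cross[OF G gu part(3) part(4) part(2) ne1 WAB' dis vB True zVi])
    next
      case False
      then have zB: "z \<in> B" using zW by simp
      have gv: "gconnected (V - {v}) {e\<in>E. v \<notin> e}" using conn uV(2) unfolding two_vertex_connected_def by blast
      have p3: "Vi \<union> Vj = V - {v, u}" using part(3) by (simp add: insert_commute)
      have W2: "B \<union> A = Vi \<union> {v, u}" using WAB' by (simp add: insert_commute Un_commute)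
      have d2: "B \<inter> A = {}" using dis by (simp add: Int_commute)
      have "\<exists>a\<in>B. \<exists>b\<in>A. {a, b} \<in> E" by (rule cross[OF G gv p3 part(4) part(2) ne1 W2 d2 uA zB zVi])
      then obtain a' b' where "a' \<in> B" "b' \<in> A" "{a', b'} \<in> E" by blast
      moreover have "{b', a'} = {a', b'}" by (rule insert_commute)
      ultimately have "b' \<in> A" "a' \<in> B" "{b', a'} \<in> E" by simp_all
      then show ?thesis by (meson bexI)
    qed
    then obtain a b where ab: "a \<in> A" "b \<in> B" "{a, b} \<in> E" by blast
    define f where "f = {a, b}"
    have aW: "a \<in> ?W" and bW: "b \<in> ?W" using ab(1,2) AW BW by auto
    have fW: "f \<in> induced_edges E ?W" unfolding f_def induced_edges_def using ab(3) aW bW by simp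
    have fnot: "f \<notin> ?Fi"
    proof
      assume "f \<in> ?Fi"
      then have "b \<in> A" using sA(5)[of a b] ab(1) unfolding f_def by simp
      then show False using ab(2) dis by blast
    qed
    define H' where "H' = H \<union> {f}"
    have H'E: "H' \<subseteq> E" unfolding H'_def using H(1) fW unfolding induced_edges_def by blast
    have eqF: "H' \<inter> induced_edges E ?W = ?Fi \<union> {f}" unfolding H'_def using fW by blast
    have okF2: "edges_ok ?W (?Fi \<union> {f})" using edges_ok_ind[OF G, of ?W H'] unfolding eqF .
    have vu2: "R (?Fi \<union> {f}) v u"
    proof -
      have "R ?Fi v b" using ab(2) unfolding B_def by simp
      then have 1: "R (?Fi \<union> {f}) v b" by (rule R_mono[rotated]) blast
      have 2: "R (?Fi \<union> {f}) b a" by (rule R_edge) (simp add: f_def insert_commute)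
      have "R ?Fi u a" using ab(1) unfolding A_def by simp
      then have "R ?Fi a u" by (rule R_sym)
      then have 3: "R (?Fi \<union> {f}) a u" by (rule R_mono[rotated]) blast
      show ?thesis using R_trans[OF R_trans[OF 1 2] 3] .
    qed
    have gc2: "gconnected ?W (?Fi \<union> {f})"
    proof (rule hub[where c=u])
      fix z assume "z \<in> ?W"
      then have "R ?Fi z u \<or> R ?Fi z v" using ra by blast
      then show "R (?Fi \<union> {f}) z u"
      proof
        assume "R ?Fi z u" then show ?thesis by (rule R_mono[rotated]) blast
      next
        assume "R ?Fi z v" then have "R (?Fi \<union> {f}) z v" by (rule R_mono[rotated]) blast
        then show ?thesis using vu2 by (rule R_trans)
      qed
    qed
    have hyp2: "\<forall>e\<in>?Fi \<union> {f}. R (?Fi \<union> {f} - {e}) u v \<longrightarrow> gconnected ?W (?Fi \<union> {f} - {e})"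
    proof (intro ballI impI)
      fix e assume e: "e \<in> ?Fi \<union> {f}" and p: "R (?Fi \<union> {f} - {e}) u v"
      show "gconnected ?W (?Fi \<union> {f} - {e})"
      proof (rule hub[where c=u])
        fix z assume zW': "z \<in> ?W"
        have "R (?Fi \<union> {f} - {e}) z u \<or> R (?Fi \<union> {f} - {e}) z v"
        proof (cases "e = f")
          case True
          have "R ?Fi z u \<or> R ?Fi z v" using ra zW' by blast
          moreover have sub: "?Fi \<subseteq> ?Fi \<union> {f} - {e}" using True fnot by blast
          ultimately show ?thesis using R_mono[OF sub, of z u] R_mono[OF sub, of z v] by blast
        next
          case False
          then have "e \<in> ?Fi" using e by simp
          then have "R (?Fi - {e}) z u \<or> R (?Fi - {e}) z v" using rm zW' by blast
          moreover have sub: "?Fi - {e} \<subseteq> ?Fi \<union> {f} - {e}" by blast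
          ultimately show ?thesis using R_mono[OF sub, of z u] R_mono[OF sub, of z v] by blast
        qed
        then show "R (?Fi \<union> {f} - {e}) z u"
        proof
          assume "R (?Fi \<union> {f} - {e}) z v" then show ?thesis using R_sym[OF p] by (rule R_trans)
        qed
      qed
    qed
    have PT2: "PT ?W (?Fi \<union> {f}) u v" by (rule path_type[OF finW okF2 uW vW gc2 hyp2])
    have AB2: "type_A ?W (?Fi \<union> {f}) u v \<or> type_B ?W (?Fi \<union> {f}) u v" using PT_AB[OF PT2] by blast
    have nA2: "\<not> type_A ?W (?Fi \<union> {f}) u v"
    proof
      assume "type_A ?W (?Fi \<union> {f}) u v"
      then have ceq: "comp_of ?W (?Fi \<union> {f}) u = comp_of ?W (?Fi \<union> {f}) v" unfolding type_A_def by simp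
      let ?X = "comp_of ?W (?Fi \<union> {f}) u"
      have X: "?X \<in> comps ?W (?Fi \<union> {f})" "u \<in> ?X" using comp_of_props[OF finW uW] by auto
      have "v \<in> comp_of ?W (?Fi \<union> {f}) v" using comp_of_props[OF finW vW] by auto
      then have vX: "v \<in> ?X" using ceq by simp
      have "has_2ec_subgraph_on ?W (?Fi \<union> {f}) ?X" using X(1) unfolding comps_def is_2ec_comp_def by simp
      then obtain F'' where F'': "F'' \<subseteq> ?Fi \<union> {f}" "two_edge_connected ?X F''"
        unfolding has_2ec_subgraph_on_def by blast
      have "gconnected ?X (F'' - {f})" by (rule tec_minus[OF F''(2)])
      then have "R (F'' - {f}) u v" using X(2) vX unfolding gconnected_def by blast
      then have "R ?Fi u v" by (rule R_mono[rotated]) (use F''(1) in blast)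
      then show False using False by simp
    qed
    have tB2: "type_B ?W (?Fi \<union> {f}) u v" using AB2 nA2 by simp
    have tecH': "two_edge_connected V H'" unfolding two_edge_connected_def
    proof (intro conjI ballI)
      show "gconnected V H'" using gH unfolding H'_def by (rule gconn_mono) blast
      fix e assume "e \<in> H'"
      have "gconnected V (H - {e})" by (rule tec_minus[OF H(2)])
      then show "gconnected V (H' - {e})" unfolding H'_def by (rule gconn_mono) blast
    qed
    have part3: "(\<exists>f\<in>induced_edges E ?W. type_B ?W (?Fi \<union> {f}) u v)
        \<and> (\<exists>H'. H' \<subseteq> E \<and> two_edge_connected V H' \<and>
             (type_A ?W (H' \<inter> induced_edges E ?W) u v \<or> type_B ?W (H' \<inter> induced_edges E ?W) u v))"
    proof
      show "\<exists>f\<in>induced_edges E ?W. type_B ?W (?Fi \<union> {f}) u v" using fW tB2 by blast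
      show "\<exists>H'. H' \<subseteq> E \<and> two_edge_connected V H' \<and>
             (type_A ?W (H' \<inter> induced_edges E ?W) u v \<or> type_B ?W (H' \<inter> induced_edges E ?W) u v)"
        using H'E tecH' tB2 eqF by (intro exI[of _ H']) simp
    qed
    show ?thesis using tC tAj part3 by blast
  qed
qed


theorem lemma11:
  fixes V :: "'a set" and E H :: "'a set set" and u v :: 'a and V1 V2 :: "'a set"
  assumes G: "simple_graph V E"
    and conn: "two_vertex_connected V E"
    and no_irr: "\<forall>e\<in>E. \<not> irrelevant_edge V E e"
    and cut: "two_vertex_cut V E u v"
    and part: "V1 \<noteq> {}" "V2 \<noteq> {}" "V1 \<union> V2 = V - {u, v}" "V1 \<inter> V2 = {}"
    and noedge: "\<forall>a\<in>V1. \<forall>b\<in>V2. {a, b} \<notin> E"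
    and H: "H \<subseteq> E" "two_edge_connected V H"
  shows "\<forall>(Vi, Vj) \<in> {(V1, V2), (V2, V1)}.
     (type_A (Vi \<union> {u, v}) (H \<inter> induced_edges E (Vi \<union> {u, v})) u v
      \<or> type_B (Vi \<union> {u, v}) (H \<inter> induced_edges E (Vi \<union> {u, v})) u v
      \<or> type_C (Vi \<union> {u, v}) (H \<inter> induced_edges E (Vi \<union> {u, v})) u v)
   \<and> (type_C (Vi \<union> {u, v}) (H \<inter> induced_edges E (Vi \<union> {u, v})) u v
      \<longrightarrow> type_A (Vj \<union> {u, v}) (H \<inter> induced_edges E (Vj \<union> {u, v})) u v)
   \<and> (type_C (Vi \<union> {u, v}) (H \<inter> induced_edges E (Vi \<union> {u, v})) u v
      \<longrightarrow> (\<exists>f\<in>induced_edges E (Vi \<union> {u, v}).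
             type_B (Vi \<union> {u, v}) (H \<inter> induced_edges E (Vi \<union> {u, v}) \<union> {f}) u v)
        \<and> (\<exists>H'. H' \<subseteq> E \<and> two_edge_connected V H' \<and>
             (type_A (Vi \<union> {u, v}) (H' \<inter> induced_edges E (Vi \<union> {u, v})) u v
              \<or> type_B (Vi \<union> {u, v}) (H' \<inter> induced_edges E (Vi \<union> {u, v})) u v)))"
proof -
  have uV: "u \<in> V" "v \<in> V" "u \<noteq> v" using cut unfolding two_vertex_cut_def by auto
  have ne2: "\<forall>a\<in>V2. \<forall>b\<in>V1. {a, b} \<notin> E"
  proof (intro ballI)
    fix a b assume "a \<in> V2" "b \<in> V1"
    then have "{b, a} \<notin> E" using noedge by blast
    moreover have "{b, a} = {a, b}" by (rule insert_commute)
    ultimately show "{a, b} \<notin> E" by simp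
  qed
  have p3: "V2 \<union> V1 = V - {u, v}" using part(3) by (simp add: Un_commute)
  have p4: "V2 \<inter> V1 = {}" using part(4) by (simp add: Int_commute)
  note r1 = main_side[OF G conn uV part(1) part(2) part(3) part(4) noedge ne2 H]
  note r2 = main_side[OF G conn uV part(2) part(1) p3 p4 ne2 noedge H]
  show ?thesis
  proof (intro ballI)
    fix p assume "p \<in> {(V1, V2), (V2, V1)}"
    then have "p = (V1, V2) \<or> p = (V2, V1)" by simp
    then show "case p of (Vi, Vj) \<Rightarrow>
     (type_A (Vi \<union> {u, v}) (H \<inter> induced_edges E (Vi \<union> {u, v})) u v
      \<or> type_B (Vi \<union> {u, v}) (H \<inter> induced_edges E (Vi \<union> {u, v})) u v
      \<or> type_C (Vi \<union> {u, v}) (H \<inter> induced_edges E (Vi \<union> {u, v})) u v)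
   \<and> (type_C (Vi \<union> {u, v}) (H \<inter> induced_edges E (Vi \<union> {u, v})) u v
      \<longrightarrow> type_A (Vj \<union> {u, v}) (H \<inter> induced_edges E (Vj \<union> {u, v})) u v)
   \<and> (type_C (Vi \<union> {u, v}) (H \<inter> induced_edges E (Vi \<union> {u, v})) u v
      \<longrightarrow> (\<exists>f\<in>induced_edges E (Vi \<union> {u, v}).
             type_B (Vi \<union> {u, v}) (H \<inter> induced_edges E (Vi \<union> {u, v}) \<union> {f}) u v)
        \<and> (\<exists>H'. H' \<subseteq> E \<and> two_edge_connected V H' \<and>
             (type_A (Vi \<union> {u, v}) (H' \<inter> induced_edges E (Vi \<union> {u, v})) u v
              \<or> type_B (Vi \<union> {u, v}) (H' \<inter> induced_edges E (Vi \<union> {u, v})) u v)))"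
    proof
      assume pe: "p = (V1, V2)" show ?thesis unfolding pe prod.case by (rule r1)
    next
      assume pe: "p = (V2, V1)" show ?thesis unfolding pe prod.case by (rule r2)
    qed
  qed
qed

end
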